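(* Let $\mu\in\mathbb{C}\setminus\{0\}$ and $\bm v=(v_1^{\mathrm T}\,\cdots\,v_N^{\mathrm T})^{\mathrm T}\in\mathbb{C}^{Nd}\setminus\{0\}$ satisfy $\mathcal N(\mu)\bm v=0$, and let $\bm q$ solve $\dot{\bm q}(s)=A(s,\mu)\bm q(s)$, $s\in[0,1]$, $\bm q(0)=\bm v$. Then \[ \frac{d\mathcal N(\mu)}{d\mu}\bm v=\bm q_\mu(1)-\bm v_N, \] where $\bm v_N=(0\,\cdots\,0\,v_1^{\mathrm T})^{\mathrm T}\in\mathbb{C}^{Nd}$ and $\bm q_\mu$ is the solution of \[ \dot{\bm q}_\mu(s)=\frac{\partial A(s,\mu)}{\partial\mu}\bm q(s)+A(s,\mu)\bm q_\mu(s),\quad s\in[0,1],\qquad \bm q_\mu(0)=0. \]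
   Context: Setting: $A_j:\mathbb{R}\to\mathbb{R}^{d\times d}$ ($j=0,\dots,h$) smooth and $T$-periodic, $T=N\Delta$ with $\Delta>0$, $N\in\mathbb{N}$, delays $\tau_j=n_j\Delta$ with integers $0=n_0\le n_1<\cdots<n_h$. For $\mu\neq0$ define the $Nd\times Nd$ matrix $A(s,\mu)$ by: for $\bm q=(q_1^{\mathrm T},\ldots,q_N^{\mathrm T})^{\mathrm T}$, the $n$-th $d$-block of $A(s,\mu)\bm q$ equals $\Delta\sum_{j=0}^h A_j((s+n-1)\Delta)\mu^{a_{n-n_j}}q_{b_{n-n_j}}$, with $a_k=\lfloor(k-1)/N\rfloor$, $b_k=((k-1)\bmod N)+1$. Let $B(\mu)=\begin{pmatrix}0&I_{N-1}\\ \mu&0\end{pmatrix}\otimes I_d$. The characteristic matrix $\mathcal N(\mu)$ is defined by $\mathcal N(\mu)\bm v=\bm q(1)-B(\mu)\bm v$, where $\bm q$ solves $\dot{\bm q}(s)=A(s,\mu)\bm q(s)$ on $[0,1]$, $\bm q(0)=\bm v$; it is analytic on $\mathbb{C}\setminus\{0\}$. *)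

theory Defs
  imports "HOL-Analysis.Analysis"
begin

(* A vector bold-q in C^{Nd} is represented as  q :: nat => nat => complex,
   q n i = i-th component (i < d) of the n-th d-block (n in {1..N}).
   Values outside this index range are irrelevant.
   An Nd x Nd matrix is M :: nat => nat => nat => nat => complex,
   M n i m k = entry in row (block n, comp i), column (block m, comp k).
   The coefficient functions A_j are  Aj j :: real => nat => nat => real,
   Aj j t i k = (i,k) entry of A_j(t), for i,k < d.
   Delays tau_j = nd j * Delta. *)

type_synonym bvec = "nat \<Rightarrow> nat \<Rightarrow> complex"
type_synonym bmat = "nat \<Rightarrow> nat \<Rightarrow> nat \<Rightarrow> nat \<Rightarrow> complex"

definition smooth_fun :: "(real \<Rightarrow> real) \<Rightarrow> bool" where
  "smooth_fun f \<longleftrightarrow> (\<forall>k x. ((deriv ^^ k) f) differentiable (at x))"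

text \<open>a_k = floor((k-1)/N) (int div is floor division), b_k = ((k-1) mod N) + 1\<close>
definition aidx :: "nat \<Rightarrow> int \<Rightarrow> int" where
  "aidx N k = (k - 1) div int N"

definition bidx :: "nat \<Rightarrow> int \<Rightarrow> nat" where
  "bidx N k = nat ((k - 1) mod int N + 1)"

definition Amat :: "nat \<Rightarrow> real \<Rightarrow> nat \<Rightarrow> (nat \<Rightarrow> nat)
    \<Rightarrow> (nat \<Rightarrow> real \<Rightarrow> nat \<Rightarrow> nat \<Rightarrow> real) \<Rightarrow> real \<Rightarrow> complex \<Rightarrow> bmat" where
  "Amat N \<Delta> h nd Aj s \<mu> n i m k =
     complex_of_real \<Delta> * (\<Sum>j\<le>h.
        if bidx N (int n - int (nd j)) = m
        then complex_of_real (Aj j ((s + real n - 1) * \<Delta>) i k) * \<mu> powi aidx N (int n - int (nd j))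
        else 0)"

definition mat_app :: "nat \<Rightarrow> nat \<Rightarrow> bmat \<Rightarrow> bvec \<Rightarrow> bvec" where
  "mat_app d N M q = (\<lambda>n i. \<Sum>m\<in>{1..N}. \<Sum>k<d. M n i m k * q m k)"

text \<open>Action of B(mu) = [[0, I_{N-1}],[mu, 0]] (x) I_d.\<close>
definition Bapp :: "nat \<Rightarrow> complex \<Rightarrow> bvec \<Rightarrow> bvec" where
  "Bapp N \<mu> v = (\<lambda>n i. if n < N then v (n + 1) i else \<mu> * v 1 i)"

definition ivp_sol :: "nat \<Rightarrow> nat \<Rightarrow> (real \<Rightarrow> bvec \<Rightarrow> bvec) \<Rightarrow> bvec \<Rightarrow> (real \<Rightarrow> bvec) \<Rightarrow> bool" where
  "ivp_sol d N F v q \<longleftrightarrow>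
     (\<forall>n\<in>{1..N}. \<forall>i<d. q 0 n i = v n i \<and>
        (\<forall>s\<in>{0..1}. ((\<lambda>t. q t n i) has_vector_derivative F s (q s) n i) (at s within {0..1})))"

text \<open>N(mu) v = q(1) - B(mu) v, with q the (unique) solution of q' = A(s,mu) q, q(0)=v;
  the solution is normalised to 0 outside [0,1] and outside the index range.\<close>
definition char_app :: "nat \<Rightarrow> nat \<Rightarrow> real \<Rightarrow> nat \<Rightarrow> (nat \<Rightarrow> nat)
    \<Rightarrow> (nat \<Rightarrow> real \<Rightarrow> nat \<Rightarrow> nat \<Rightarrow> real) \<Rightarrow> complex \<Rightarrow> bvec \<Rightarrow> bvec" where
  "char_app d N \<Delta> h nd Aj \<mu> v = (\<lambda>n i.
     (THE q. ivp_sol d N (\<lambda>s x. mat_app d N (Amat N \<Delta> h nd Aj s \<mu>) x) v q \<and>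
        (\<forall>s n i. (s \<notin> {0..1} \<or> n \<notin> {1..N} \<or> d \<le> i) \<longrightarrow> q s n i = 0)) 1 n i
     - Bapp N \<mu> v n i)"

definition char_mat :: "nat \<Rightarrow> nat \<Rightarrow> real \<Rightarrow> nat \<Rightarrow> (nat \<Rightarrow> nat)
    \<Rightarrow> (nat \<Rightarrow> real \<Rightarrow> nat \<Rightarrow> nat \<Rightarrow> real) \<Rightarrow> complex \<Rightarrow> bmat" where
  "char_mat d N \<Delta> h nd Aj \<mu> n i m k =
     char_app d N \<Delta> h nd Aj \<mu> (\<lambda>m' k'. if m' = m \<and> k' = k then 1 else 0) n i"

definition vN :: "nat \<Rightarrow> bvec \<Rightarrow> bvec" where
  "vN N v = (\<lambda>n i. if n = N then v 1 i else 0)"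

end

theory Submission
  imports Defs
begin


definition bnorm :: "nat \<Rightarrow> nat \<Rightarrow> bvec \<Rightarrow> real" where
  "bnorm d N x = (\<Sum>m\<in>{1..N}. \<Sum>k<d. norm (x m k))"

lemma bnorm_nonneg: "0 \<le> bnorm d N x"
  unfolding bnorm_def by (intro sum_nonneg) auto

lemma bnorm_ge: "n \<in> {1..N} \<Longrightarrow> i < d \<Longrightarrow> norm (x n i) \<le> bnorm d N x"
proof -
  assume a: "n \<in> {1..N}" "i < d"
  have "norm (x n i) \<le> (\<Sum>k<d. norm (x n k))"
    using a by (intro member_le_sum) auto
  also have "\<dots> \<le> bnorm d N x" unfolding bnorm_def
    using a by (intro member_le_sum[where f="\<lambda>m. \<Sum>k<d. norm (x m k)"] sum_nonneg) auto
  finally show ?thesis .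
qed

lemma bnorm_le:
  assumes "\<forall>n\<in>{1..N}. \<forall>i<d. norm (x n i) \<le> b"
  shows "bnorm d N x \<le> real N * real d * b"
proof -
  have "bnorm d N x \<le> (\<Sum>m\<in>{1..N}. \<Sum>k<d. b)" unfolding bnorm_def
    using assms by (intro sum_mono) auto
  also have "(\<Sum>m\<in>{1..N}. \<Sum>k<d. b) = real N * real d * b"
    by (simp only: sum_constant card_atLeastAtMost card_lessThan) (simp add: mult.assoc)
  finally show ?thesis .
qed

lemma mat_app_bound:
  assumes "\<forall>m\<in>{1..N}. \<forall>k<d. norm (M n i m k) \<le> B"
  shows "norm (mat_app d N M x n i) \<le> B * bnorm d N x"
proof -
  have "norm (mat_app d N M x n i) \<le> (\<Sum>m\<in>{1..N}. norm (\<Sum>k<d. M n i m k * x m k))"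
    unfolding mat_app_def by (rule norm_sum)
  also have "\<dots> \<le> (\<Sum>m\<in>{1..N}. \<Sum>k<d. norm (M n i m k * x m k))"
    by (intro sum_mono norm_sum)
  also have "\<dots> \<le> (\<Sum>m\<in>{1..N}. \<Sum>k<d. B * norm (x m k))"
    using assms by (intro sum_mono) (auto simp: norm_mult intro!: mult_right_mono)
  also have "\<dots> = B * bnorm d N x"
    unfolding bnorm_def by (simp add: sum_distrib_left)
  finally show ?thesis .
qed

lemma mat_app_local:
  assumes "\<forall>m\<in>{1..N}. \<forall>k<d. x m k = y m k"
  shows "mat_app d N M x n i = mat_app d N M y n i"
  unfolding mat_app_def using assms by (intro sum.cong) auto

lemma mat_app_diff:
  "mat_app d N M x n i - mat_app d N M y n i = mat_app d N M (\<lambda>m k. x m k - y m k) n i"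
  unfolding mat_app_def by (simp add: sum_subtractf right_diff_distrib)

lemma cmp:
  fixes f f' :: "real \<Rightarrow> complex" and \<phi> \<phi>' :: "real \<Rightarrow> real"
  assumes f0: "f 0 = 0" and p0: "0 \<le> \<phi> 0"
    and fd: "\<And>s. s\<in>{0..1} \<Longrightarrow> (f has_vector_derivative f' s) (at s within {0..1})"
    and pd: "\<And>s. (\<phi> has_real_derivative \<phi>' s) (at s)"
    and b: "\<And>s. s\<in>{0..1} \<Longrightarrow> norm (f' s) \<le> \<phi>' s"
    and s: "s \<in> {0..1}"
  shows "norm (f s) \<le> \<phi> s"
proof (cases "s = 0")
  case True then show ?thesis using f0 p0 by simp
next
  case False
  then have s: "0 < s" "s \<le> 1" using s by auto
  have fc: "continuous_on {0..1} f"
    by (rule continuous_on_vector_derivative) (use fd in auto)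
  have "norm (f s - f 0) \<le> \<phi> s - \<phi> 0"
  proof (rule differentiable_bound_general[OF s(1)])
    show "continuous_on {0..s} f" using fc by (rule continuous_on_subset) (use s in auto)
    show "continuous_on {0..s} \<phi>"
      by (intro continuous_at_imp_continuous_on ballI DERIV_isCont[OF pd])
    fix x assume x: "0 < x" "x < s"
    have int: "x \<in> interior {0..1::real}" using x s by (simp add: interior_atLeastAtMost_real)
    have "x \<in> {0..1}" using x s by auto
    then have "(f has_vector_derivative f' x) (at x within {0..1})" by (rule fd)
    then show "(f has_vector_derivative f' x) (at x)"
      by (simp only: at_within_interior[OF int])
    show "(\<phi> has_vector_derivative \<phi>' x) (at x)"
      using pd has_real_derivative_iff_has_vector_derivative by blast
    show "norm (f' x) \<le> \<phi>' x" using b x s by auto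
  qed
  then show ?thesis using f0 p0 by simp
qed

lemma phi_deriv:
  assumes "L > 0"
  shows "((\<lambda>s. K * (L * s)^(Suc p) / fact (Suc p) + \<epsilon> / L * (exp (L * s) - 1)) has_real_derivative
     (K * L * (L * s)^p / fact p + \<epsilon> * exp (L * s))) (at s)"
proof -
  have "((\<lambda>s. K * (L * s)^(Suc p) / fact (Suc p) + \<epsilon> / L * (exp (L * s) - 1)) has_real_derivative
     (K * (real (Suc p) * (L * s)^p * L) / fact (Suc p) + \<epsilon> / L * (exp (L * s) * L))) (at s)"
    by (auto intro!: derivative_eq_intros simp del: fact_Suc power_Suc)
  moreover have "K * (real (Suc p) * (L * s)^p * L) / fact (Suc p) + \<epsilon> / L * (exp (L * s) * L)
      = K * L * (L * s)^p / fact p + \<epsilon> * exp (L * s)"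
    using assms by (simp add: field_simps del: of_nat_Suc)
  ultimately show ?thesis by simp
qed



lemma bstep:
  fixes X X' Y :: "real \<Rightarrow> bvec"
  assumes B: "B \<ge> 0" and e: "\<epsilon> \<ge> 0" and K: "K \<ge> 0" and L: "L = B * real N * real d + 1"
   and X0: "\<forall>n\<in>{1..N}. \<forall>i<d. X 0 n i = 0"
   and Xd: "\<forall>s\<in>{0..1}. \<forall>n\<in>{1..N}. \<forall>i<d. ((\<lambda>t. X t n i) has_vector_derivative X' s n i) (at s within {0..1})"
   and Xb: "\<forall>s\<in>{0..1}. \<forall>n\<in>{1..N}. \<forall>i<d. norm (X' s n i) \<le> B * bnorm d N (Y s) + \<epsilon>"
   and Yb: "\<forall>s\<in>{0..1}. \<forall>n\<in>{1..N}. \<forall>i<d. norm (Y s n i) \<le> K * (L * s)^p / fact p + \<epsilon> / L * (exp (L * s) - 1)"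
  shows "\<forall>s\<in>{0..1}. \<forall>n\<in>{1..N}. \<forall>i<d. norm (X s n i) \<le> K * (L * s)^(Suc p) / fact (Suc p) + \<epsilon> / L * (exp (L * s) - 1)"
proof (intro ballI allI impI)
  fix s :: real and n i assume s: "s \<in> {0..1}" and n: "n \<in> {1..N}" and i: "i < d"
  have Lpos: "L > 0" using L B by (simp add: add_nonneg_pos)
  define b where "b = (\<lambda>s. K * (L * s)^p / fact p + \<epsilon> / L * (exp (L * s) - 1))"
  show "norm (X s n i) \<le> K * (L * s)^(Suc p) / fact (Suc p) + \<epsilon> / L * (exp (L * s) - 1)"
  proof (rule cmp[where f="\<lambda>t. X t n i" and f'="\<lambda>t. X' t n i" and
        \<phi>'="\<lambda>s. K * L * (L * s)^p / fact p + \<epsilon> * exp (L * s)"])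
    show "X 0 n i = 0" using X0 n i by auto
    show "0 \<le> K * (L * 0) ^ Suc p / fact (Suc p) + \<epsilon> / L * (exp (L * 0) - 1)" by simp
    show "((\<lambda>t. X t n i) has_vector_derivative X' t n i) (at t within {0..1})" if "t \<in> {0..1}" for t
      using Xd that n i by auto
    show "((\<lambda>s. K * (L * s)^(Suc p) / fact (Suc p) + \<epsilon> / L * (exp (L * s) - 1)) has_real_derivative
        K * L * (L * t)^p / fact p + \<epsilon> * exp (L * t)) (at t)" for t
      by (rule phi_deriv[OF Lpos])
    show "norm (X' t n i) \<le> K * L * (L * t)^p / fact p + \<epsilon> * exp (L * t)" if t: "t \<in> {0..1}" for t
    proof -
      have bnn: "0 \<le> b t" unfolding b_def using t K e Lpos by (auto intro!: add_nonneg_nonneg divide_nonneg_nonneg mult_nonneg_nonneg)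
      have "bnorm d N (Y t) \<le> real N * real d * b t"
        by (rule bnorm_le) (use Yb t in \<open>auto simp: b_def\<close>)
      then have "B * bnorm d N (Y t) \<le> B * (real N * real d * b t)"
        using B by (rule mult_left_mono)
      also have "\<dots> \<le> (L - 1) * b t" using L by (simp add: mult.assoc)
      finally have "norm (X' t n i) \<le> (L - 1) * b t + \<epsilon>" using Xb t n i by force
      also have "\<dots> \<le> L * b t + \<epsilon>" using bnn by (simp add: algebra_simps)
      also have "L * b t + \<epsilon> = K * L * (L * t)^p / fact p + \<epsilon> * exp (L * t)"
        unfolding b_def using Lpos by (simp add: field_simps)
      finally show ?thesis .
    qed
  qed (use s in auto)
qed

lemma finite_bound:
  fixes f :: "'a \<Rightarrow> 'b \<Rightarrow> real"
  assumes "finite T" "\<And>t. t \<in> T \<Longrightarrow> \<exists>B. \<forall>s\<in>S. f t s \<le> B"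
  shows "\<exists>B. \<forall>t\<in>T. \<forall>s\<in>S. f t s \<le> B"
  using assms
proof (induction T rule: finite_induct)
  case empty then show ?case by auto
next
  case (insert x F)
  obtain B1 where B1: "\<forall>t\<in>F. \<forall>s\<in>S. f t s \<le> B1" using insert.IH insert.prems by blast
  obtain B2 where B2: "\<forall>s\<in>S. f x s \<le> B2" using insert.prems[of x] by blast
  show ?case
    by (rule exI[of _ "max B1 B2"]) (use B1 B2 in \<open>auto simp: le_max_iff_disj\<close>)
qed

lemma cont_bound:
  fixes f :: "real \<Rightarrow> 'a::real_normed_vector"
  assumes "continuous_on {0..1} f"
  shows "\<exists>B. \<forall>s\<in>{0..1}. norm (f s) \<le> B"
proof -
  have "compact (f ` {0..1})" by (rule compact_continuous_image[OF assms compact_Icc])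
  then have "bounded (f ` {0..1})" by (rule compact_imp_bounded)
  then show ?thesis by (auto simp: bounded_iff)
qed

lemma ivp_cont:
  fixes x :: "real \<Rightarrow> bvec"
  assumes "ivp_sol d N F v x" "n \<in> {1..N}" "i < d"
  shows "continuous_on {0..1} (\<lambda>s. x s n i)"
proof (rule continuous_on_vector_derivative)
  fix s :: real assume "s \<in> {0..1}"
  then show "((\<lambda>s. x s n i) has_vector_derivative F s (x s) n i) (at s within {0..1})"
    using assms unfolding ivp_sol_def by blast
qed

lemma bnorm_cont:
  fixes x :: "real \<Rightarrow> bvec"
  assumes "\<forall>n\<in>{1..N}. \<forall>i<d. continuous_on {0..1} (\<lambda>s. x s n i)"
  shows "continuous_on {0..1} (\<lambda>s. bnorm d N (x s))"
  unfolding bnorm_def using assms by (intro continuous_intros) auto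

lemma bnorm_bound:
  fixes x :: "real \<Rightarrow> bvec"
  assumes "\<forall>n\<in>{1..N}. \<forall>i<d. continuous_on {0..1} (\<lambda>s. x s n i)"
  shows "\<exists>K\<ge>0. \<forall>s\<in>{0..1}. bnorm d N (x s) \<le> K"
proof -
  obtain K where K: "\<forall>s\<in>{0..1}. norm (bnorm d N (x s)) \<le> K"
    using cont_bound[OF bnorm_cont[OF assms]] by blast
  show ?thesis
    by (rule exI[of _ "max K 0"]) (use K in \<open>auto simp: le_max_iff_disj\<close>)
qed

lemma ivp_bnorm_bound:
  fixes x :: "real \<Rightarrow> bvec"
  assumes "ivp_sol d N F v x"
  shows "\<exists>K\<ge>0. \<forall>s\<in>{0..1}. bnorm d N (x s) \<le> K"
  using assms by (intro bnorm_bound ballI allI impI ivp_cont) auto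

lemma lim_pow_fact: "(\<lambda>p. K * (L ^ p / fact p)) \<longlonglongrightarrow> (0::real)"
proof -
  have "(\<lambda>p. L ^ p / fact p) \<longlonglongrightarrow> (0::real)"
    using summable_LIMSEQ_zero [OF summable_exp[of L]] by (auto simp add: inverse_eq_divide)
  then show ?thesis by (rule tendsto_mult_right_zero)
qed

lemma gronwall:
  fixes R R' :: "real \<Rightarrow> bvec"
  assumes B: "B \<ge> 0" and e: "\<epsilon> \<ge> 0"
   and R0: "\<forall>n\<in>{1..N}. \<forall>i<d. R 0 n i = 0"
   and Rd: "\<forall>s\<in>{0..1}. \<forall>n\<in>{1..N}. \<forall>i<d. ((\<lambda>t. R t n i) has_vector_derivative R' s n i) (at s within {0..1})"
   and Rb: "\<forall>s\<in>{0..1}. \<forall>n\<in>{1..N}. \<forall>i<d. norm (R' s n i) \<le> B * bnorm d N (R s) + \<epsilon>"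
  shows "\<forall>s\<in>{0..1}. \<forall>n\<in>{1..N}. \<forall>i<d. norm (R s n i) \<le> \<epsilon> * exp (B * real N * real d + 1)"
proof (intro ballI allI impI)
  fix s :: real and n i assume s: "s \<in> {0..1}" and n: "n \<in> {1..N}" and i: "i < d"
  define L where "L = B * real N * real d + 1"
  have Lpos: "L \<ge> 1" using B by (simp add: L_def)
  have cont: "\<forall>n\<in>{1..N}. \<forall>i<d. continuous_on {0..1} (\<lambda>s. R s n i)"
    using Rd by (auto intro!: continuous_on_vector_derivative)
  obtain K where K: "K \<ge> 0" "\<forall>s\<in>{0..1}. bnorm d N (R s) \<le> K"
    using bnorm_bound[OF cont] by blast
  have claim: "\<forall>s\<in>{0..1}. \<forall>n\<in>{1..N}. \<forall>i<d. norm (R s n i) \<le> K * (L * s)^p / fact p + \<epsilon> / L * (exp (L * s) - 1)" for p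
  proof (induction p)
    case 0
    show ?case
    proof (intro ballI allI impI)
      fix s :: real and n i assume s: "s \<in> {0..1}" and n: "n \<in> {1..N}" and i: "i < d"
      have "norm (R s n i) \<le> K" using bnorm_ge[OF n i, of "R s"] K s by force
      moreover have "0 \<le> \<epsilon> / L * (exp (L * s) - 1)" using e Lpos s by auto
      ultimately show "norm (R s n i) \<le> K * (L * s)^0 / fact 0 + \<epsilon> / L * (exp (L * s) - 1)" by simp
    qed
  next
    case (Suc p)
    show ?case by (rule bstep[OF B e K(1) L_def R0 Rd Rb Suc])
  qed
  define c where "c = \<epsilon> / L * (exp (L * s) - 1)"
  have le: "norm (R s n i) - c \<le> K * (L ^ p / fact p)" for p
  proof -
    have "(L * s)^p \<le> L^p" using s Lpos by (intro power_mono) (auto simp: mult_le_cancel_left1)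
    then have "K * (L * s)^p / fact p \<le> K * (L ^ p / fact p)"
      using K(1) by (simp add: divide_right_mono mult_left_mono)
    moreover have "norm (R s n i) \<le> K * (L * s)^p / fact p + c"
      using claim[of p] s n i unfolding c_def by blast
    ultimately show ?thesis by linarith
  qed
  have "norm (R s n i) - c \<le> 0"
    by (rule LIMSEQ_le_const[OF lim_pow_fact[of K L]]) (use le in auto)
  moreover have "c \<le> \<epsilon> * exp L"
  proof -
    have "\<epsilon> / L \<le> \<epsilon>" using e Lpos by (simp add: divide_le_eq mult_le_cancel_left1)
    moreover have "exp (L * s) - 1 \<le> exp L"
    proof -
      have "L * s \<le> L" using s Lpos by (simp add: mult_le_cancel_left1)
      then have "exp (L * s) \<le> exp L" by (simp only: exp_le_cancel_iff)
      then show ?thesis by linarith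
    qed
    moreover have "exp (L * s) - 1 \<ge> 0" using s Lpos by simp
    ultimately show ?thesis unfolding c_def using e by (intro mult_mono) auto
  qed
  ultimately show "norm (R s n i) \<le> \<epsilon> * exp (B * real N * real d + 1)" by (simp add: L_def)
qed



definition Mcont :: "nat \<Rightarrow> nat \<Rightarrow> (real \<Rightarrow> bmat) \<Rightarrow> bool" where
  "Mcont d N M \<longleftrightarrow> (\<forall>n\<in>{1..N}. \<forall>i<d. \<forall>m\<in>{1..N}. \<forall>k<d. continuous_on {0..1} (\<lambda>s. M s n i m k))"

definition Fg :: "nat \<Rightarrow> nat \<Rightarrow> (real \<Rightarrow> bmat) \<Rightarrow> (real \<Rightarrow> bvec) \<Rightarrow> real \<Rightarrow> bvec \<Rightarrow> bvec" where
  "Fg d N M g = (\<lambda>s y n i. mat_app d N (M s) y n i + g s n i)"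

lemma mat_app_cont:
  fixes M :: "real \<Rightarrow> bmat" and x :: "real \<Rightarrow> bvec"
  assumes "\<forall>m\<in>{1..N}. \<forall>k<d. continuous_on {0..1} (\<lambda>s. M s n i m k)"
    and "\<forall>m\<in>{1..N}. \<forall>k<d. continuous_on {0..1} (\<lambda>s. x s m k)"
  shows "continuous_on {0..1} (\<lambda>s. mat_app d N (M s) (x s) n i)"
  unfolding mat_app_def using assms by (intro continuous_intros) auto

lemma comp_bound:
  fixes y :: "real \<Rightarrow> bvec"
  assumes "\<forall>n\<in>{1..N}. \<forall>i<d. continuous_on {0..1} (\<lambda>s. y s n i)"
  shows "\<exists>K\<ge>0. \<forall>s\<in>{0..1}. \<forall>n\<in>{1..N}. \<forall>i<d. norm (y s n i) \<le> K"
proof -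
  obtain K where K: "K \<ge> 0" "\<forall>s\<in>{0..1}. bnorm d N (y s) \<le> K" using bnorm_bound[OF assms] by blast
  show ?thesis using K bnorm_ge by (meson order_trans)
qed

lemma Mbound:
  assumes "Mcont d N M"
  shows "\<exists>B\<ge>0. \<forall>s\<in>{0..1}. \<forall>n\<in>{1..N}. \<forall>i<d. \<forall>m\<in>{1..N}. \<forall>k<d. norm (M s n i m k) \<le> B"
proof -
  let ?T = "{1..N} \<times> {..<d} \<times> {1..N} \<times> {..<d}"
  have "\<exists>B. \<forall>t\<in>?T. \<forall>s\<in>{0..1}. (case t of (n,i,m,k) \<Rightarrow> norm (M s n i m k)) \<le> B"
  proof (rule finite_bound)
    show "finite ?T" by auto
    fix t assume "t \<in> ?T"
    then obtain n i m k where t: "t = (n,i,m,k)" "n\<in>{1..N}" "i<d" "m\<in>{1..N}" "k<d" by auto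
    have "continuous_on {0..1} (\<lambda>s. M s n i m k)" using assms t unfolding Mcont_def by auto
    then obtain B where "\<forall>s\<in>{0..1}. norm (M s n i m k) \<le> B" using cont_bound by blast
    then show "\<exists>B. \<forall>s\<in>{0..1}. (case t of (n,i,m,k) \<Rightarrow> norm (M s n i m k)) \<le> B" using t by auto
  qed
  then obtain B where B: "\<forall>t\<in>?T. \<forall>s\<in>{0..1}. (case t of (n,i,m,k) \<Rightarrow> norm (M s n i m k)) \<le> B" by blast
  show ?thesis
  proof (rule exI[of _ "max B 0"], intro conjI ballI allI impI)
    show "0 \<le> max B 0" by simp
    fix s :: real and n i m k assume "s \<in> {0..1}" "n \<in> {1..N}" "i < d" "m \<in> {1..N}" "k < d"
    then show "norm (M s n i m k) \<le> max B 0" using B[rule_format, of "(n,i,m,k)" s] by auto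
  qed
qed

primrec pic :: "nat \<Rightarrow> nat \<Rightarrow> (real \<Rightarrow> bmat) \<Rightarrow> (real \<Rightarrow> bvec) \<Rightarrow> bvec \<Rightarrow> nat \<Rightarrow> real \<Rightarrow> bvec" where
  "pic d N M g v 0 = (\<lambda>s. v)"
| "pic d N M g v (Suc p) = (\<lambda>s n i. v n i + integral {0..s} (\<lambda>t. mat_app d N (M t) (pic d N M g v p t) n i + g t n i))"

lemma pic_deriv:
  assumes M: "Mcont d N M" and g: "\<forall>n\<in>{1..N}. \<forall>i<d. continuous_on {0..1} (\<lambda>s. g s n i)"
    and pc: "\<forall>n\<in>{1..N}. \<forall>i<d. continuous_on {0..1} (\<lambda>s. pic d N M g v p s n i)"
  shows "\<forall>s\<in>{0..1}. \<forall>n\<in>{1..N}. \<forall>i<d. ((\<lambda>t. pic d N M g v (Suc p) t n i) has_vector_derivative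
              (mat_app d N (M s) (pic d N M g v p s) n i + g s n i)) (at s within {0..1})"
proof (intro ballI allI impI)
  fix s :: real and n i assume s: "s \<in> {0..1}" and n: "n \<in> {1..N}" and i: "i < d"
  have c: "continuous_on {0..1} (\<lambda>t. mat_app d N (M t) (pic d N M g v p t) n i + g t n i)"
    using M g pc n i unfolding Mcont_def by (intro continuous_on_add mat_app_cont) auto
  have "((\<lambda>t. v n i + integral {0..t} (\<lambda>t. mat_app d N (M t) (pic d N M g v p t) n i + g t n i))
      has_vector_derivative (0 + (mat_app d N (M s) (pic d N M g v p s) n i + g s n i))) (at s within {0..1})"
    by (rule has_vector_derivative_add[OF has_vector_derivative_const integral_has_vector_derivative[OF c s]])
  then show "((\<lambda>t. pic d N M g v (Suc p) t n i) has_vector_derivative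
              (mat_app d N (M s) (pic d N M g v p s) n i + g s n i)) (at s within {0..1})"
    by simp
qed

lemma pic_cont:
  assumes M: "Mcont d N M" and g: "\<forall>n\<in>{1..N}. \<forall>i<d. continuous_on {0..1} (\<lambda>s. g s n i)"
  shows "\<forall>n\<in>{1..N}. \<forall>i<d. continuous_on {0..1} (\<lambda>s. pic d N M g v p s n i)"
proof (induction p)
  case 0 then show ?case by simp
next
  case (Suc p)
  have d: "\<forall>s\<in>{0..1}. \<forall>n\<in>{1..N}. \<forall>i<d. ((\<lambda>t. pic d N M g v (Suc p) t n i) has_vector_derivative
              (mat_app d N (M s) (pic d N M g v p s) n i + g s n i)) (at s within {0..1})"
    by (rule pic_deriv[OF M g Suc])
  show ?case
  proof (intro ballI allI impI)
    fix n i assume n: "n \<in> {1..N}" and i: "i < d"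
    show "continuous_on {0..1} (\<lambda>s. pic d N M g v (Suc p) s n i)"
      by (rule continuous_on_vector_derivative) (use d n i in blast)
  qed
qed

lemma pic_0: "pic d N M g v p 0 n i = v n i"
  by (cases p) auto

lemma pic_tele: "pic d N M g v p s n i = v n i + (\<Sum>j<p. pic d N M g v (Suc j) s n i - pic d N M g v j s n i)"
  by (induction p) (simp_all del: pic.simps(2))



lemma exist:
  assumes M: "Mcont d N M" and g: "\<forall>n\<in>{1..N}. \<forall>i<d. continuous_on {0..1} (\<lambda>s. g s n i)"
  shows "\<exists>x. ivp_sol d N (Fg d N M g) v x"
proof -
  obtain B where B: "B \<ge> 0" "\<forall>s\<in>{0..1}. \<forall>n\<in>{1..N}. \<forall>i<d. \<forall>m\<in>{1..N}. \<forall>k<d. norm (M s n i m k) \<le> B"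
    using Mbound[OF M] by blast
  define L where "L = B * real N * real d + 1"
  have Lpos: "L \<ge> 1" using B by (simp add: L_def)
  let ?P = "pic d N M g v"
  have pc: "\<forall>n\<in>{1..N}. \<forall>i<d. continuous_on {0..1} (\<lambda>s. ?P p s n i)" for p using pic_cont[OF M g] .
  have pd: "\<forall>s\<in>{0..1}. \<forall>n\<in>{1..N}. \<forall>i<d. ((\<lambda>t. ?P (Suc p) t n i) has_vector_derivative
      (mat_app d N (M s) (?P p s) n i + g s n i)) (at s within {0..1})" for p
    using pic_deriv[OF M g pc] .
  define D where "D = (\<lambda>p s n i. ?P (Suc p) s n i - ?P p s n i)"
  have c0: "\<forall>n\<in>{1..N}. \<forall>i<d. continuous_on {0..1} (\<lambda>s. mat_app d N (M s) v n i + g s n i)"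
    using M g unfolding Mcont_def by (auto intro!: continuous_on_add mat_app_cont)
  obtain K0 where K0: "K0 \<ge> 0" "\<forall>s\<in>{0..1}. \<forall>n\<in>{1..N}. \<forall>i<d. norm (mat_app d N (M s) v n i + g s n i) \<le> K0"
    using comp_bound[OF c0] by blast
  have Dd: "\<forall>s\<in>{0..1}. \<forall>n\<in>{1..N}. \<forall>i<d. ((\<lambda>t. D (Suc p) t n i) has_vector_derivative
      mat_app d N (M s) (D p s) n i) (at s within {0..1})" for p
  proof (intro ballI allI impI)
    fix s :: real and n i assume s: "s \<in> {0..1}" and n: "n \<in> {1..N}" and i: "i < d"
    show "((\<lambda>t. D (Suc p) t n i) has_vector_derivative mat_app d N (M s) (D p s) n i) (at s within {0..1})"
      unfolding D_def
      by (rule has_vector_derivative_eq_rhs[OF has_vector_derivative_diff[OF pd[of "Suc p", rule_format, OF s n i] pd[of p, rule_format, OF s n i]]])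
         (simp add: mat_app_diff)
  qed
  have claim: "\<forall>s\<in>{0..1}. \<forall>n\<in>{1..N}. \<forall>i<d. norm (D p s n i) \<le> K0 * (L * s)^p / fact p + 0 / L * (exp (L * s) - 1)" for p
  proof (induction p)
    case 0
    show ?case
    proof (intro ballI allI impI)
      fix s :: real and n i assume s: "s \<in> {0..1}" and n: "n \<in> {1..N}" and i: "i < d"
      have "norm (D 0 s n i) \<le> K0 * s"
      proof (rule cmp[where f="\<lambda>t. D 0 t n i" and f'="\<lambda>t. mat_app d N (M t) v n i + g t n i" and \<phi>'="\<lambda>t. K0"])
        show "D 0 0 n i = 0" by (simp add: D_def pic_0 del: pic.simps)
        show "((\<lambda>t. K0 * t) has_real_derivative K0) (at t)" for t
          by (auto intro!: derivative_eq_intros)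
        show "((\<lambda>t. D 0 t n i) has_vector_derivative mat_app d N (M t) v n i + g t n i) (at t within {0..1})"
          if t: "t \<in> {0..1}" for t
          unfolding D_def pic.simps(1)
          by (rule has_vector_derivative_eq_rhs[OF has_vector_derivative_diff[OF pd[of 0, rule_format, OF t n i] has_vector_derivative_const]])
             simp
        show "norm (mat_app d N (M t) v n i + g t n i) \<le> K0" if "t \<in> {0..1}" for t
          using K0 that n i by blast
      qed (use s K0 in auto)
      also have "\<dots> \<le> K0" using s K0 by (simp add: mult_left_le)
      finally show "norm (D 0 s n i) \<le> K0 * (L * s)^0 / fact 0 + 0 / L * (exp (L * s) - 1)" by simp
    qed
  next
    case (Suc p)
    show ?case
    proof (rule bstep[OF B(1) order_refl K0(1) L_def _ Dd _ Suc])
      show "\<forall>n\<in>{1..N}. \<forall>i<d. D (Suc p) 0 n i = 0" by (simp add: D_def pic_0 del: pic.simps)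
      show "\<forall>s\<in>{0..1}. \<forall>n\<in>{1..N}. \<forall>i<d. norm (mat_app d N (M s) (D p s) n i) \<le> B * bnorm d N (D p s) + 0"
        using B by (auto intro!: mat_app_bound)
    qed
  qed
  have Db: "norm (D p s n i) \<le> K0 * (L ^ p / fact p)" if s: "s \<in> {0..1}" and n: "n \<in> {1..N}" and i: "i < d" for p s n i
  proof -
    have "(L * s)^p \<le> L^p" using s Lpos by (intro power_mono) (auto simp: mult_le_cancel_left1)
    then have "K0 * (L * s)^p / fact p \<le> K0 * (L ^ p / fact p)"
      using K0(1) by (simp add: divide_right_mono mult_left_mono)
    moreover have "norm (D p s n i) \<le> K0 * (L * s)^p / fact p" using claim[of p] s n i by simp
    ultimately show ?thesis by linarith
  qed
  have summ: "summable (\<lambda>p. K0 * (L ^ p / fact p))"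
    using summable_mult[OF summable_exp[of L], of K0] by (simp add: divide_inverse mult_ac)
  define x where "x = (\<lambda>s n i. v n i + (\<Sum>j. D j s n i))"
  have UL: "uniform_limit {0..1} (\<lambda>p s. \<Sum>j<p. D j s n i) (\<lambda>s. \<Sum>j. D j s n i) sequentially"
    if n: "n \<in> {1..N}" and i: "i < d" for n i
    by (rule Weierstrass_m_test[OF _ summ]) (use Db n i in auto)
  have UC: "\<forall>\<^sub>F p in sequentially. \<forall>s\<in>{0..1}. dist (?P p s n i) (x s n i) < e"
    if n: "n \<in> {1..N}" and i: "i < d" and e: "e > 0" for n i e
  proof -
    have "\<forall>\<^sub>F p in sequentially. \<forall>s\<in>{0..1}. dist (\<Sum>j<p. D j s n i) (\<Sum>j. D j s n i) < e"
      using UL[OF n i] e unfolding uniform_limit_iff by blast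
    moreover have eq: "?P p s n i = v n i + (\<Sum>j<p. D j s n i)" for p s
      unfolding D_def by (rule pic_tele)
    ultimately show ?thesis
      by (elim eventually_mono) (simp only: eq x_def dist_add_cancel)
  qed
  have UCall: "\<forall>\<^sub>F p in sequentially. \<forall>t\<in>{1..N} \<times> {..<d}. \<forall>s\<in>{0..1}. dist (?P p s (fst t) (snd t)) (x s (fst t) (snd t)) < e"
    if e: "e > 0" for e
    by (rule eventually_ball_finite) (use UC e in auto)
  have xd: "((\<lambda>t. x t n i) has_vector_derivative (mat_app d N (M s) (x s) n i + g s n i)) (at s within {0..1})"
    if s: "s \<in> {0..1}" and n: "n \<in> {1..N}" and i: "i < d" for s n i
  proof -
    have "\<exists>G. \<forall>s\<in>{0..1}. (\<lambda>p. ?P (Suc p) s n i) \<longlonglongrightarrow> G s \<and>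
        (G has_derivative (\<lambda>h. h *\<^sub>R (mat_app d N (M s) (x s) n i + g s n i))) (at s within {0..1})"
    proof (rule has_derivative_sequence[of "{0..1}" "\<lambda>p t. ?P (Suc p) t n i" "\<lambda>p s h. h *\<^sub>R (mat_app d N (M s) (?P p s) n i + g s n i)"
          "\<lambda>s h. h *\<^sub>R (mat_app d N (M s) (x s) n i + g s n i)" 0 "v n i"])
      show "convex {0..1::real}" by (rule convex_real_interval)
      show "((\<lambda>t. ?P (Suc p) t n i) has_derivative (\<lambda>h. h *\<^sub>R (mat_app d N (M s) (?P p s) n i + g s n i))) (at s within {0..1})"
        if "s \<in> {0..1}" for p s
        using pd[of p] that n i unfolding has_vector_derivative_def by blast
      show "(0::real) \<in> {0..1}" by simp
      show "(\<lambda>p. ?P (Suc p) 0 n i) \<longlonglongrightarrow> v n i" by (simp only: pic_0) simp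
      fix e :: real assume e: "e > 0"
      have eL: "e / L > 0" using e Lpos by simp
      show "\<forall>\<^sub>F p in sequentially. \<forall>s\<in>{0..1}. \<forall>h. norm (h *\<^sub>R (mat_app d N (M s) (?P p s) n i + g s n i)
              - h *\<^sub>R (mat_app d N (M s) (x s) n i + g s n i)) \<le> e * norm h"
        using UCall[OF eL]
      proof (rule eventually_mono)
        fix p assume H: "\<forall>t\<in>{1..N} \<times> {..<d}. \<forall>s\<in>{0..1}. dist (?P p s (fst t) (snd t)) (x s (fst t) (snd t)) < e / L"
        show "\<forall>s\<in>{0..1}. \<forall>h. norm (h *\<^sub>R (mat_app d N (M s) (?P p s) n i + g s n i)
              - h *\<^sub>R (mat_app d N (M s) (x s) n i + g s n i)) \<le> e * norm h"
        proof (intro ballI allI)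
          fix s :: real and h :: real assume s: "s \<in> {0..1}"
          have "norm (mat_app d N (M s) (\<lambda>m k. ?P p s m k - x s m k) n i) \<le> B * bnorm d N (\<lambda>m k. ?P p s m k - x s m k)"
            using B s n i by (intro mat_app_bound) auto
          also have "bnorm d N (\<lambda>m k. ?P p s m k - x s m k) \<le> real N * real d * (e / L)"
          proof (rule bnorm_le, intro ballI allI impI)
            fix m k assume "m \<in> {1..N}" "k < d"
            then have "dist (?P p s m k) (x s m k) < e / L" using H s by force
            then show "norm (?P p s m k - x s m k) \<le> e / L" by (simp add: dist_norm)
          qed
          then have "B * bnorm d N (\<lambda>m k. ?P p s m k - x s m k) \<le> B * (real N * real d * (e / L))"
            using B(1) by (rule mult_left_mono)
          also have "\<dots> = (L - 1) * (e / L)" by (simp add: L_def)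
          also have "\<dots> \<le> e" using Lpos e by (simp add: field_simps)
          finally have *: "norm (mat_app d N (M s) (\<lambda>m k. ?P p s m k - x s m k) n i) \<le> e" .
          have "h *\<^sub>R (mat_app d N (M s) (?P p s) n i + g s n i) - h *\<^sub>R (mat_app d N (M s) (x s) n i + g s n i)
              = h *\<^sub>R (mat_app d N (M s) (\<lambda>m k. ?P p s m k - x s m k) n i)"
            by (simp only: mat_app_diff[symmetric] scaleR_diff_right[symmetric]) simp
          then show "norm (h *\<^sub>R (mat_app d N (M s) (?P p s) n i + g s n i)
              - h *\<^sub>R (mat_app d N (M s) (x s) n i + g s n i)) \<le> e * norm h"
            using mult_left_mono[OF *, of "\<bar>h\<bar>"] by (simp add: mult.commute)
        qed
      qed
    qed
    then obtain G where G: "\<forall>s\<in>{0..1}. (\<lambda>p. ?P (Suc p) s n i) \<longlonglongrightarrow> G s \<and>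
        (G has_derivative (\<lambda>h. h *\<^sub>R (mat_app d N (M s) (x s) n i + g s n i))) (at s within {0..1})"
      by blast
    have lim: "(\<lambda>p. ?P p t n i) \<longlonglongrightarrow> x t n i" if t: "t \<in> {0..1}" for t
    proof (rule tendstoI)
      fix e :: real assume "e > 0"
      from UC[OF n i this] show "\<forall>\<^sub>F p in sequentially. dist (?P p t n i) (x t n i) < e"
        by (rule eventually_mono) (use t in blast)
    qed
    have Gx: "G t = x t n i" if t: "t \<in> {0..1}" for t
    proof -
      have "(\<lambda>p. ?P (Suc p) t n i) \<longlonglongrightarrow> x t n i" using lim[OF t] by (rule LIMSEQ_Suc)
      then show ?thesis using G t LIMSEQ_unique by blast
    qed
    have "((\<lambda>t. x t n i) has_derivative (\<lambda>h. h *\<^sub>R (mat_app d N (M s) (x s) n i + g s n i))) (at s within {0..1})"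
      by (rule has_derivative_transform[OF s _ conjunct2[OF G[rule_format, OF s]]]) (use Gx in auto)
    then show ?thesis unfolding has_vector_derivative_def .
  qed
  have x0: "x 0 n i = v n i" for n i
    by (simp add: x_def D_def pic_0 del: pic.simps)
  show ?thesis
    by (rule exI[of _ x]) (use x0 xd in \<open>auto simp: ivp_sol_def Fg_def\<close>)
qed



lemma uniq:
  assumes M: "Mcont d N M" and x: "ivp_sol d N (Fg d N M g) v x" and y: "ivp_sol d N (Fg d N M g) v y"
  shows "\<forall>s\<in>{0..1}. \<forall>n\<in>{1..N}. \<forall>i<d. x s n i = y s n i"
proof -
  obtain B where B: "B \<ge> 0" "\<forall>s\<in>{0..1}. \<forall>n\<in>{1..N}. \<forall>i<d. \<forall>m\<in>{1..N}. \<forall>k<d. norm (M s n i m k) \<le> B"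
    using Mbound[OF M] by blast
  define R where "R = (\<lambda>s n i. x s n i - y s n i)"
  have R0: "\<forall>n\<in>{1..N}. \<forall>i<d. R 0 n i = 0" using x y unfolding ivp_sol_def R_def by auto
  have Rd: "\<forall>s\<in>{0..1}. \<forall>n\<in>{1..N}. \<forall>i<d. ((\<lambda>t. R t n i) has_vector_derivative mat_app d N (M s) (R s) n i) (at s within {0..1})"
  proof (intro ballI allI impI)
    fix s :: real and n i assume s: "s \<in> {0..1}" and n: "n \<in> {1..N}" and i: "i < d"
    have a: "((\<lambda>t. x t n i) has_vector_derivative (mat_app d N (M s) (x s) n i + g s n i)) (at s within {0..1})"
      using x s n i unfolding ivp_sol_def Fg_def by blast
    have b: "((\<lambda>t. y t n i) has_vector_derivative (mat_app d N (M s) (y s) n i + g s n i)) (at s within {0..1})"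
      using y s n i unfolding ivp_sol_def Fg_def by blast
    show "((\<lambda>t. R t n i) has_vector_derivative mat_app d N (M s) (R s) n i) (at s within {0..1})"
      unfolding R_def
      by (rule has_vector_derivative_eq_rhs[OF has_vector_derivative_diff[OF a b]]) (simp add: mat_app_diff)
  qed
  have Rb: "\<forall>s\<in>{0..1}. \<forall>n\<in>{1..N}. \<forall>i<d. norm (mat_app d N (M s) (R s) n i) \<le> B * bnorm d N (R s) + 0"
    using B by (auto intro!: mat_app_bound)
  have "\<forall>s\<in>{0..1}. \<forall>n\<in>{1..N}. \<forall>i<d. norm (R s n i) \<le> 0 * exp (B * real N * real d + 1)"
    by (rule gronwall[OF B(1) order_refl R0 Rd Rb])
  then show ?thesis unfolding R_def by auto
qed

lemma ivp_transfer:
  assumes x: "ivp_sol d N F v x" and xy: "\<forall>s\<in>{0..1}. \<forall>n\<in>{1..N}. \<forall>i<d. x s n i = y s n i"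
   and loc: "\<forall>s\<in>{0..1}. \<forall>x y. (\<forall>m\<in>{1..N}. \<forall>k<d. x m k = y m k) \<longrightarrow> (\<forall>n\<in>{1..N}. \<forall>i<d. F s x n i = F s y n i)"
  shows "ivp_sol d N F v y"
  unfolding ivp_sol_def
proof (intro ballI allI impI conjI)
  fix n i assume n: "n \<in> {1..N}" and i: "i < d"
  show "y 0 n i = v n i" using x xy n i unfolding ivp_sol_def by force
  fix s :: real assume s: "s \<in> {0..1}"
  have a: "((\<lambda>t. x t n i) has_vector_derivative F s (x s) n i) (at s within {0..1})"
    using x s n i unfolding ivp_sol_def by blast
  have "F s (x s) n i = F s (y s) n i" using loc xy s n i by blast
  then have a': "((\<lambda>t. x t n i) has_vector_derivative F s (y s) n i) (at s within {0..1})" using a by simp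
  show "((\<lambda>t. y t n i) has_vector_derivative F s (y s) n i) (at s within {0..1})"
    by (rule has_vector_derivative_transform[OF s _ a']) (use xy n i in auto)
qed

lemma Fg_loc: "\<forall>s\<in>{0..1}. \<forall>x y. (\<forall>m\<in>{1..N}. \<forall>k<d. x m k = y m k) \<longrightarrow> (\<forall>n\<in>{1..N}. \<forall>i<d. Fg d N M g s x n i = Fg d N M g s y n i)"
  unfolding Fg_def using mat_app_local by metis

lemma ivp_cong_F:
  assumes "ivp_sol d N F v x" "\<forall>s\<in>{0..1}. \<forall>y. \<forall>n\<in>{1..N}. \<forall>i<d. F s y n i = G s y n i"
  shows "ivp_sol d N G v x"
  using assms unfolding ivp_sol_def by auto

definition nsol :: "nat \<Rightarrow> nat \<Rightarrow> (real \<Rightarrow> bvec \<Rightarrow> bvec) \<Rightarrow> bvec \<Rightarrow> real \<Rightarrow> bvec" where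
  "nsol d N F v = (THE q. ivp_sol d N F v q \<and> (\<forall>s n i. (s \<notin> {0..1} \<or> n \<notin> {1..N} \<or> d \<le> i) \<longrightarrow> q s n i = 0))"

lemma nsol:
  assumes ex: "\<exists>x. ivp_sol d N F v x"
   and un: "\<And>x y. ivp_sol d N F v x \<Longrightarrow> ivp_sol d N F v y \<Longrightarrow> \<forall>s\<in>{0..1}. \<forall>n\<in>{1..N}. \<forall>i<d. x s n i = y s n i"
   and loc: "\<forall>s\<in>{0..1}. \<forall>x y. (\<forall>m\<in>{1..N}. \<forall>k<d. x m k = y m k) \<longrightarrow> (\<forall>n\<in>{1..N}. \<forall>i<d. F s x n i = F s y n i)"
  shows "ivp_sol d N F v (nsol d N F v)"
    and "\<And>y. ivp_sol d N F v y \<Longrightarrow> \<forall>s\<in>{0..1}. \<forall>n\<in>{1..N}. \<forall>i<d. nsol d N F v s n i = y s n i"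
proof -
  obtain x where x: "ivp_sol d N F v x" using ex by blast
  define xn where "xn = (\<lambda>s n i. if s \<in> {0..1} \<and> n \<in> {1..N} \<and> i < d then x s n i else 0)"
  have xn: "ivp_sol d N F v xn" by (rule ivp_transfer[OF x _ loc]) (auto simp: xn_def)
  have P: "ivp_sol d N F v xn \<and> (\<forall>s n i. (s \<notin> {0..1} \<or> n \<notin> {1..N} \<or> d \<le> i) \<longrightarrow> xn s n i = 0)"
    using xn by (auto simp: xn_def)
  have U: "q = xn" if q: "ivp_sol d N F v q \<and> (\<forall>s n i. (s \<notin> {0..1} \<or> n \<notin> {1..N} \<or> d \<le> i) \<longrightarrow> q s n i = 0)" for q
  proof (intro ext)
    fix s n i
    show "q s n i = xn s n i"
    proof (cases "s \<in> {0..1} \<and> n \<in> {1..N} \<and> i < d")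
      case True then show ?thesis using un[of q xn] q xn by auto
    next
      case False then show ?thesis using q by (auto simp: xn_def not_less)
    qed
  qed
  have eq: "nsol d N F v = xn" unfolding nsol_def
    by (rule the_equality[where P="\<lambda>q. ivp_sol d N F v q \<and> (\<forall>s n i. (s \<notin> {0..1} \<or> n \<notin> {1..N} \<or> d \<le> i) \<longrightarrow> q s n i = 0)", OF P U])
  show "ivp_sol d N F v (nsol d N F v)" using xn eq by simp
  show "\<forall>s\<in>{0..1}. \<forall>n\<in>{1..N}. \<forall>i<d. nsol d N F v s n i = y s n i" if "ivp_sol d N F v y" for y
    using un[OF xn that] eq by simp
qed

lemma ident:
  "mat_app d N Mz Qz n i - mat_app d N Mm Qm n i - c * (mat_app d N M' Qm n i + mat_app d N Mm P n i)
   = mat_app d N Mz (\<lambda>m k. Qz m k - Qm m k - c * P m k) n i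
     + (mat_app d N (\<lambda>n i m k. Mz n i m k - Mm n i m k - c * M' n i m k) Qm n i
        + c * mat_app d N (\<lambda>n i m k. Mz n i m k - Mm n i m k) P n i)"
  unfolding mat_app_def
  by (simp add: algebra_simps sum.distrib sum_subtractf sum_distrib_left)



lemma main_deriv:
  fixes M :: "complex \<Rightarrow> real \<Rightarrow> bmat" and M' :: "real \<Rightarrow> bmat" and Q :: "complex \<Rightarrow> real \<Rightarrow> bvec"
    and P :: "real \<Rightarrow> bvec"
  assumes Qs: "\<forall>\<^sub>F z in at \<mu>. ivp_sol d N (\<lambda>s x. mat_app d N (M z s) x) w (Q z)"
   and Qmu: "ivp_sol d N (\<lambda>s x. mat_app d N (M \<mu> s) x) w (Q \<mu>)"
   and Pv: "ivp_sol d N (\<lambda>s x n i. mat_app d N (M' s) (Q \<mu> s) n i + mat_app d N (M \<mu> s) x n i) (\<lambda>_ _. 0) P"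
   and B: "B \<ge> 0"
   and MB: "\<forall>\<^sub>F z in at \<mu>. \<forall>s\<in>{0..1}. \<forall>n\<in>{1..N}. \<forall>i<d. \<forall>m\<in>{1..N}. \<forall>k<d. norm (M z s n i m k) \<le> B"
   and B': "B' \<ge> 0"
   and M'B: "\<forall>s\<in>{0..1}. \<forall>n\<in>{1..N}. \<forall>i<d. \<forall>m\<in>{1..N}. \<forall>k<d. norm (M' s n i m k) \<le> B'"
   and est: "\<And>e. e > 0 \<Longrightarrow> \<forall>\<^sub>F z in at \<mu>. \<forall>s\<in>{0..1}. \<forall>n\<in>{1..N}. \<forall>i<d. \<forall>m\<in>{1..N}. \<forall>k<d.
                norm (M z s n i m k - M \<mu> s n i m k - (z - \<mu>) * M' s n i m k) \<le> e * norm (z - \<mu>)"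
   and n: "n \<in> {1..N}" and i: "i < d"
  shows "((\<lambda>z. Q z 1 n i) has_field_derivative P 1 n i) (at \<mu>)"
proof -
  obtain KQ where KQ: "KQ \<ge> 0" "\<forall>s\<in>{0..1}. bnorm d N (Q \<mu> s) \<le> KQ" using ivp_bnorm_bound[OF Qmu] by blast
  obtain KP where KP: "KP \<ge> 0" "\<forall>s\<in>{0..1}. bnorm d N (P s) \<le> KP" using ivp_bnorm_bound[OF Pv] by blast
  define L where "L = B * real N * real d + 1"
  define C where "C = (KQ + (1 + B') * KP) * exp L"
  have C: "C \<ge> 0" unfolding C_def using KQ KP B' by auto
  show ?thesis unfolding has_field_derivative_iff
  proof (rule tendstoI)
    fix e :: real assume e: "e > 0"
    define e1 where "e1 = min 1 (e / (2 * (C + 1)))"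
    have e1: "e1 > 0" "e1 \<le> 1" using e C by (auto simp: e1_def)
    have e1C: "e1 * C < e"
    proof -
      have "e1 * C \<le> e / (2 * (C + 1)) * C" using C by (intro mult_right_mono) (auto simp: e1_def)
      also have "\<dots> < e" using C e
        by (simp add: field_simps, intro add_nonneg_pos mult_nonneg_nonneg, auto)
      finally show ?thesis .
    qed
    have ev_dist: "\<forall>\<^sub>F z in at \<mu>. dist z \<mu> < e1" using tendstoD[OF tendsto_ident_at e1(1)] .
    have ev_neq: "\<forall>\<^sub>F z in at \<mu>. z \<noteq> \<mu>" by (auto simp: eventually_at intro!: exI[of _ 1])
    show "\<forall>\<^sub>F z in at \<mu>. dist ((Q z 1 n i - Q \<mu> 1 n i) / (z - \<mu>)) (P 1 n i) < e"
      using Qs MB est[OF e1(1)] ev_dist ev_neq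
    proof eventually_elim
      case (elim z)
      note Qz = elim(1) and MBz = elim(2) and Ez = elim(3) and dz = elim(4) and zne = elim(5)
      define c where "c = z - \<mu>"
      have c0: "c \<noteq> 0" using zne by (simp add: c_def)
      have cle: "norm c < e1" using dz by (simp add: c_def dist_norm)
      define R where "R = (\<lambda>t n i. Q z t n i - Q \<mu> t n i - c * P t n i)"
      define R' where "R' = (\<lambda>s n i. mat_app d N (M z s) (Q z s) n i - mat_app d N (M \<mu> s) (Q \<mu> s) n i
          - c * (mat_app d N (M' s) (Q \<mu> s) n i + mat_app d N (M \<mu> s) (P s) n i))"
      have R0: "\<forall>n\<in>{1..N}. \<forall>i<d. R 0 n i = 0" using Qz Qmu Pv unfolding ivp_sol_def R_def by auto
      have Rd: "\<forall>s\<in>{0..1}. \<forall>n\<in>{1..N}. \<forall>i<d. ((\<lambda>t. R t n i) has_vector_derivative R' s n i) (at s within {0..1})"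
      proof (intro ballI allI impI)
        fix s :: real and n i assume s: "s \<in> {0..1}" and n: "n \<in> {1..N}" and i: "i < d"
        have a: "((\<lambda>t. Q z t n i) has_vector_derivative mat_app d N (M z s) (Q z s) n i) (at s within {0..1})"
          using Qz s n i unfolding ivp_sol_def by blast
        have b: "((\<lambda>t. Q \<mu> t n i) has_vector_derivative mat_app d N (M \<mu> s) (Q \<mu> s) n i) (at s within {0..1})"
          using Qmu s n i unfolding ivp_sol_def by blast
        have p: "((\<lambda>t. P t n i) has_vector_derivative (mat_app d N (M' s) (Q \<mu> s) n i + mat_app d N (M \<mu> s) (P s) n i)) (at s within {0..1})"
          using Pv s n i unfolding ivp_sol_def by blast
        show "((\<lambda>t. R t n i) has_vector_derivative R' s n i) (at s within {0..1})"
          unfolding R_def R'_def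
          by (intro has_vector_derivative_diff a b has_vector_derivative_mult_right p)
      qed
      have Rb: "\<forall>s\<in>{0..1}. \<forall>n\<in>{1..N}. \<forall>i<d. norm (R' s n i) \<le> B * bnorm d N (R s) + norm c * e1 * (KQ + (1 + B') * KP)"
      proof (intro ballI allI impI)
        fix s :: real and n i assume s: "s \<in> {0..1}" and n: "n \<in> {1..N}" and i: "i < d"
        have id: "R' s n i = mat_app d N (M z s) (R s) n i
           + (mat_app d N (\<lambda>n i m k. M z s n i m k - M \<mu> s n i m k - c * M' s n i m k) (Q \<mu> s) n i
              + c * mat_app d N (\<lambda>n i m k. M z s n i m k - M \<mu> s n i m k) (P s) n i)"
          unfolding R'_def R_def by (rule ident)
        have t1: "norm (mat_app d N (M z s) (R s) n i) \<le> B * bnorm d N (R s)"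
          using MBz s n i by (intro mat_app_bound) auto
        have t2: "norm (mat_app d N (\<lambda>n i m k. M z s n i m k - M \<mu> s n i m k - c * M' s n i m k) (Q \<mu> s) n i)
            \<le> (e1 * norm c) * KQ"
        proof -
          have "norm (mat_app d N (\<lambda>n i m k. M z s n i m k - M \<mu> s n i m k - c * M' s n i m k) (Q \<mu> s) n i)
              \<le> (e1 * norm c) * bnorm d N (Q \<mu> s)"
            using Ez s n i by (intro mat_app_bound) (auto simp: c_def)
          also have "\<dots> \<le> (e1 * norm c) * KQ" using KQ s e1 by (intro mult_left_mono) auto
          finally show ?thesis .
        qed
        have t3: "norm (c * mat_app d N (\<lambda>n i m k. M z s n i m k - M \<mu> s n i m k) (P s) n i)
            \<le> norm c * (e1 * (1 + B') * KP)"
        proof -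
          have ent: "norm (M z s n i m k - M \<mu> s n i m k) \<le> e1 * (1 + B')" if m: "m \<in> {1..N}" and k: "k < d" for m k
          proof -
            have "norm (M z s n i m k - M \<mu> s n i m k)
                \<le> norm (M z s n i m k - M \<mu> s n i m k - c * M' s n i m k) + norm (c * M' s n i m k)"
              using norm_triangle_sub[of "M z s n i m k - M \<mu> s n i m k" "c * M' s n i m k"] by linarith
            also have "\<dots> \<le> e1 * norm c + norm c * B'"
              using Ez M'B s n i m k by (intro add_mono) (auto simp: c_def norm_mult intro!: mult_left_mono)
            also have "\<dots> \<le> e1 * 1 + e1 * B'"
              using cle e1 B' by (intro add_mono mult_left_mono mult_right_mono) auto
            finally show ?thesis by (simp add: algebra_simps)
          qed
          have "norm (mat_app d N (\<lambda>n i m k. M z s n i m k - M \<mu> s n i m k) (P s) n i) \<le> (e1 * (1 + B')) * bnorm d N (P s)"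
            using ent by (intro mat_app_bound) auto
          also have "\<dots> \<le> (e1 * (1 + B')) * KP" using KP s e1 B' by (intro mult_left_mono) auto
          finally show ?thesis by (simp add: norm_mult mult_left_mono)
        qed
        have "norm (R' s n i) \<le> norm (mat_app d N (M z s) (R s) n i)
           + (norm (mat_app d N (\<lambda>n i m k. M z s n i m k - M \<mu> s n i m k - c * M' s n i m k) (Q \<mu> s) n i)
              + norm (c * mat_app d N (\<lambda>n i m k. M z s n i m k - M \<mu> s n i m k) (P s) n i))"
          unfolding id by (intro order_trans[OF norm_triangle_ineq] add_left_mono norm_triangle_ineq)
        also have "\<dots> \<le> B * bnorm d N (R s) + ((e1 * norm c) * KQ + norm c * (e1 * (1 + B') * KP))"
          using t1 t2 t3 by linarith
        also have "\<dots> = B * bnorm d N (R s) + norm c * e1 * (KQ + (1 + B') * KP)"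
          by (simp add: algebra_simps)
        finally show "norm (R' s n i) \<le> B * bnorm d N (R s) + norm c * e1 * (KQ + (1 + B') * KP)" .
      qed
      have eps: "norm c * e1 * (KQ + (1 + B') * KP) \<ge> 0" using e1 KQ KP B' by auto
      have "norm (R 1 n i) \<le> norm c * e1 * (KQ + (1 + B') * KP) * exp (B * real N * real d + 1)"
        using gronwall[OF B eps R0 Rd Rb] n i by auto
      then have Rle: "norm (R 1 n i) \<le> norm c * (e1 * C)" by (simp add: C_def L_def mult_ac)
      have "dist ((Q z 1 n i - Q \<mu> 1 n i) / (z - \<mu>)) (P 1 n i) = norm (R 1 n i) / norm c"
        using c0 by (simp add: dist_norm R_def c_def[symmetric] field_simps norm_divide)
      also have "\<dots> \<le> e1 * C" using Rle c0 by (simp add: divide_le_eq mult.commute)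
      also have "\<dots> < e" by (rule e1C)
      finally show ?case .
    qed
  qed
qed



definition cc :: "nat \<Rightarrow> real \<Rightarrow> (nat \<Rightarrow> nat) \<Rightarrow> (nat \<Rightarrow> real \<Rightarrow> nat \<Rightarrow> nat \<Rightarrow> real) \<Rightarrow> nat \<Rightarrow> real \<Rightarrow> bmat" where
  "cc N \<Delta> nd Aj j s n i m k = (if bidx N (int n - int (nd j)) = m
       then complex_of_real (Aj j ((s + real n - 1) * \<Delta>) i k) else 0)"

definition aa :: "nat \<Rightarrow> (nat \<Rightarrow> nat) \<Rightarrow> nat \<Rightarrow> nat \<Rightarrow> int" where
  "aa N nd j n = aidx N (int n - int (nd j))"

definition Ad :: "nat \<Rightarrow> real \<Rightarrow> nat \<Rightarrow> (nat \<Rightarrow> nat) \<Rightarrow> (nat \<Rightarrow> real \<Rightarrow> nat \<Rightarrow> nat \<Rightarrow> real) \<Rightarrow> complex \<Rightarrow> real \<Rightarrow> bmat" where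
  "Ad N \<Delta> h nd Aj \<mu> s n i m k = complex_of_real \<Delta> *
     (\<Sum>j\<le>h. cc N \<Delta> nd Aj j s n i m k * (of_int (aa N nd j n) * \<mu> powi (aa N nd j n - 1)))"

lemma Amat_alt: "Amat N \<Delta> h nd Aj s z n i m k =
   complex_of_real \<Delta> * (\<Sum>j\<le>h. cc N \<Delta> nd Aj j s n i m k * z powi aa N nd j n)"
  unfolding Amat_def cc_def aa_def by (intro arg_cong[where f="\<lambda>x. complex_of_real \<Delta> * x"] sum.cong) auto

lemma Amat_deriv:
  assumes "\<mu> \<noteq> 0"
  shows "((\<lambda>z. Amat N \<Delta> h nd Aj s z n i m k) has_field_derivative Ad N \<Delta> h nd Aj \<mu> s n i m k) (at \<mu>)"
  unfolding Amat_alt Ad_def using assms by (auto intro!: derivative_eq_intros simp: mult_ac)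

lemma smooth_cont: "smooth_fun f \<Longrightarrow> continuous_on UNIV f"
proof -
  assume "smooth_fun f"
  then have "f differentiable (at x)" for x unfolding smooth_fun_def by (metis funpow_0)
  then show ?thesis by (intro continuous_at_imp_continuous_on ballI differentiable_imp_continuous_within)
qed

lemma cc_cont:
  assumes sm: "\<forall>j\<le>h. \<forall>i<d. \<forall>k<d. smooth_fun (\<lambda>t. Aj j t i k)" and j: "j \<le> h" and i: "i < d" and k: "k < d"
  shows "continuous_on {0..1} (\<lambda>s. cc N \<Delta> nd Aj j s n i m k)"
proof (cases "bidx N (int n - int (nd j)) = m")
  case True
  have c: "continuous_on UNIV (\<lambda>t. Aj j t i k)" using sm j i k smooth_cont by blast
  have "continuous_on {0..1} (\<lambda>s. Aj j ((s + real n - 1) * \<Delta>) i k)"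
    by (rule continuous_on_compose2[OF c _ subset_UNIV]) (intro continuous_intros)
  then show ?thesis using True unfolding cc_def by (simp add: continuous_on_of_real)
next
  case False then show ?thesis unfolding cc_def by simp
qed

lemma form_cont:
  assumes "\<forall>j\<le>h. continuous_on {0..1} (\<lambda>s. cc N \<Delta> nd Aj j s n i m k)"
  shows "continuous_on {0..1} (\<lambda>s. complex_of_real \<Delta> * (\<Sum>j\<le>h. cc N \<Delta> nd Aj j s n i m k * \<gamma> j))"
  using assms by (intro continuous_intros) auto

lemma Amat_Mcont:
  assumes sm: "\<forall>j\<le>h. \<forall>i<d. \<forall>k<d. smooth_fun (\<lambda>t. Aj j t i k)"
  shows "Mcont d N (\<lambda>s. Amat N \<Delta> h nd Aj s z)"
  unfolding Mcont_def Amat_alt using cc_cont[OF sm] by (intro ballI allI impI form_cont) auto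

lemma Ad_Mcont:
  assumes sm: "\<forall>j\<le>h. \<forall>i<d. \<forall>k<d. smooth_fun (\<lambda>t. Aj j t i k)"
  shows "Mcont d N (Ad N \<Delta> h nd Aj \<mu>)"
  unfolding Mcont_def Ad_def using cc_cont[OF sm] by (intro ballI allI impI form_cont) auto

lemma powi_est:
  fixes \<mu> :: complex
  assumes "\<mu> \<noteq> 0" "e > 0"
  shows "\<forall>\<^sub>F z in at \<mu>. norm (z powi a - \<mu> powi a - (z - \<mu>) * (of_int a * \<mu> powi (a - 1))) \<le> e * norm (z - \<mu>)"
proof -
  have "((\<lambda>z::complex. z powi a) has_field_derivative (of_int a * \<mu> powi (a - 1))) (at \<mu>)"
    using assms(1) by (auto intro!: derivative_eq_intros)
  then have "((\<lambda>z::complex. z powi a) has_derivative (*) (of_int a * \<mu> powi (a - 1))) (at \<mu>)"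
    unfolding has_field_derivative_def .
  then obtain \<delta> where \<delta>: "\<delta> > 0" "\<forall>y. norm (y - \<mu>) < \<delta> \<longrightarrow>
      norm (y powi a - \<mu> powi a - (of_int a * \<mu> powi (a - 1)) * (y - \<mu>)) \<le> e * norm (y - \<mu>)"
    unfolding has_derivative_at_alt using assms(2) by blast
  show ?thesis unfolding eventually_at
    by (rule exI[of _ \<delta>]) (use \<delta> in \<open>auto simp: dist_norm mult.commute\<close>)
qed

lemma cc_bound:
  assumes sm: "\<forall>j\<le>h. \<forall>i<d. \<forall>k<d. smooth_fun (\<lambda>t. Aj j t i k)"
  shows "\<exists>C\<ge>0. \<forall>s\<in>{0..1}. \<forall>j\<le>h. \<forall>n\<in>{1..N}. \<forall>i<d. \<forall>m\<in>{1..N}. \<forall>k<d. norm (cc N \<Delta> nd Aj j s n i m k) \<le> C"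
proof -
  let ?T = "{..h} \<times> {1..N} \<times> {..<d} \<times> {1..N} \<times> {..<d}"
  have "\<exists>B. \<forall>t\<in>?T. \<forall>s\<in>{0..1}. (case t of (j,n,i,m,k) \<Rightarrow> norm (cc N \<Delta> nd Aj j s n i m k)) \<le> B"
  proof (rule finite_bound)
    show "finite ?T" by auto
    fix t assume "t \<in> ?T"
    then obtain j n i m k where t: "t = (j,n,i,m,k)" "j \<le> h" "n\<in>{1..N}" "i<d" "m\<in>{1..N}" "k<d" by auto
    have "continuous_on {0..1} (\<lambda>s. cc N \<Delta> nd Aj j s n i m k)" using cc_cont[OF sm] t by auto
    then obtain B where "\<forall>s\<in>{0..1}. norm (cc N \<Delta> nd Aj j s n i m k) \<le> B" using cont_bound by blast
    then show "\<exists>B. \<forall>s\<in>{0..1}. (case t of (j,n,i,m,k) \<Rightarrow> norm (cc N \<Delta> nd Aj j s n i m k)) \<le> B" using t by auto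
  qed
  then obtain B where B: "\<forall>t\<in>?T. \<forall>s\<in>{0..1}. (case t of (j,n,i,m,k) \<Rightarrow> norm (cc N \<Delta> nd Aj j s n i m k)) \<le> B" by blast
  show ?thesis
  proof (rule exI[of _ "max B 0"], intro conjI ballI allI impI)
    show "0 \<le> max B 0" by simp
    fix s :: real and j n i m k assume "s \<in> {0..1}" "j \<le> h" "n \<in> {1..N}" "i < d" "m \<in> {1..N}" "k < d"
    then show "norm (cc N \<Delta> nd Aj j s n i m k) \<le> max B 0" using B[rule_format, of "(j,n,i,m,k)" s] by auto
  qed
qed

lemma Amat_diff_alt:
  "Amat N \<Delta> h nd Aj s z n i m k - Amat N \<Delta> h nd Aj s \<mu> n i m k - (z - \<mu>) * Ad N \<Delta> h nd Aj \<mu> s n i m k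
   = complex_of_real \<Delta> * (\<Sum>j\<le>h. cc N \<Delta> nd Aj j s n i m k *
        (z powi aa N nd j n - \<mu> powi aa N nd j n - (z - \<mu>) * (of_int (aa N nd j n) * \<mu> powi (aa N nd j n - 1))))"
  unfolding Amat_alt Ad_def by (simp add: algebra_simps sum_subtractf sum_distrib_left sum.distrib)



lemma Amat_est:
  assumes sm: "\<forall>j\<le>h. \<forall>i<d. \<forall>k<d. smooth_fun (\<lambda>t. Aj j t i k)" and mu: "\<mu> \<noteq> 0" and e: "e > 0"
  shows "\<forall>\<^sub>F z in at \<mu>. \<forall>s\<in>{0..1}. \<forall>n\<in>{1..N}. \<forall>i<d. \<forall>m\<in>{1..N}. \<forall>k<d.
     norm (Amat N \<Delta> h nd Aj s z n i m k - Amat N \<Delta> h nd Aj s \<mu> n i m k - (z - \<mu>) * Ad N \<Delta> h nd Aj \<mu> s n i m k)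
       \<le> e * norm (z - \<mu>)"
proof -
  obtain C where C: "C \<ge> 0" "\<forall>s\<in>{0..1}. \<forall>j\<le>h. \<forall>n\<in>{1..N}. \<forall>i<d. \<forall>m\<in>{1..N}. \<forall>k<d. norm (cc N \<Delta> nd Aj j s n i m k) \<le> C"
    using cc_bound[OF sm] by blast
  define K where "K = norm (complex_of_real \<Delta>) * real (Suc h) * C"
  have K: "K \<ge> 0" using C by (simp add: K_def)
  define e2 where "e2 = e / (K + 1)"
  have e2: "e2 > 0" using e K by (simp add: e2_def)
  have Ke2: "K * e2 \<le> e"
  proof -
    have "K * e2 = e * (K / (K + 1))" by (simp add: e2_def)
    also have "\<dots> \<le> e * 1" using K e by (intro mult_left_mono) auto
    finally show ?thesis by simp
  qed
  let ?A = "(\<lambda>(j,n). aa N nd j n) ` ({..h} \<times> {1..N})"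
  have fin: "finite ?A" by auto
  have ev: "\<forall>\<^sub>F z in at \<mu>. \<forall>a\<in>?A. norm (z powi a - \<mu> powi a - (z - \<mu>) * (of_int a * \<mu> powi (a - 1))) \<le> e2 * norm (z - \<mu>)"
    by (rule eventually_ball_finite[OF fin]) (use powi_est[OF mu e2] in blast)
  show ?thesis using ev
  proof (rule eventually_mono)
    fix z assume H: "\<forall>a\<in>?A. norm (z powi a - \<mu> powi a - (z - \<mu>) * (of_int a * \<mu> powi (a - 1))) \<le> e2 * norm (z - \<mu>)"
    show "\<forall>s\<in>{0..1}. \<forall>n\<in>{1..N}. \<forall>i<d. \<forall>m\<in>{1..N}. \<forall>k<d.
     norm (Amat N \<Delta> h nd Aj s z n i m k - Amat N \<Delta> h nd Aj s \<mu> n i m k - (z - \<mu>) * Ad N \<Delta> h nd Aj \<mu> s n i m k)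
       \<le> e * norm (z - \<mu>)"
    proof (intro ballI allI impI)
      fix s :: real and n i m k assume s: "s \<in> {0..1}" and n: "n \<in> {1..N}" and i: "i < d" and m: "m \<in> {1..N}" and k: "k < d"
      let ?phi = "\<lambda>j. z powi aa N nd j n - \<mu> powi aa N nd j n - (z - \<mu>) * (of_int (aa N nd j n) * \<mu> powi (aa N nd j n - 1))"
      have "norm (Amat N \<Delta> h nd Aj s z n i m k - Amat N \<Delta> h nd Aj s \<mu> n i m k - (z - \<mu>) * Ad N \<Delta> h nd Aj \<mu> s n i m k)
          = norm (complex_of_real \<Delta> * (\<Sum>j\<le>h. cc N \<Delta> nd Aj j s n i m k * ?phi j))"
        by (simp only: Amat_diff_alt)
      also have "\<dots> \<le> norm (complex_of_real \<Delta>) * (\<Sum>j\<le>h. norm (cc N \<Delta> nd Aj j s n i m k) * norm (?phi j))"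
        unfolding norm_mult by (intro mult_left_mono order_trans[OF norm_sum] sum_mono) (auto simp: norm_mult)
      also have "\<dots> \<le> norm (complex_of_real \<Delta>) * (\<Sum>j\<le>h. C * (e2 * norm (z - \<mu>)))"
      proof (intro mult_left_mono sum_mono mult_mono)
        fix j assume j: "j \<in> {..h}"
        show "norm (cc N \<Delta> nd Aj j s n i m k) \<le> C" using C j s n i m k by auto
        have "aa N nd j n \<in> ?A" using j n by auto
        then show "norm (?phi j) \<le> e2 * norm (z - \<mu>)" using H by blast
      qed (use C in auto)
      also have "\<dots> = K * e2 * norm (z - \<mu>)" by (simp add: K_def mult_ac)
      also have "\<dots> \<le> e * norm (z - \<mu>)" using Ke2 by (intro mult_right_mono) auto
      finally show "norm (Amat N \<Delta> h nd Aj s z n i m k - Amat N \<Delta> h nd Aj s \<mu> n i m k - (z - \<mu>) * Ad N \<Delta> h nd Aj \<mu> s n i m k)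
       \<le> e * norm (z - \<mu>)" .
    qed
  qed
qed

lemma norm3: "norm (a::complex) \<le> norm (a - b - c) + norm b + norm c"
proof -
  have "norm a = norm ((a - b - c) + b + c)" by simp
  also have "\<dots> \<le> norm ((a - b - c) + b) + norm c" by (rule norm_triangle_ineq)
  also have "\<dots> \<le> norm (a - b - c) + norm b + norm c" using norm_triangle_ineq[of "a - b - c" b] by simp
  finally show ?thesis .
qed

lemma Amat_MB:
  assumes sm: "\<forall>j\<le>h. \<forall>i<d. \<forall>k<d. smooth_fun (\<lambda>t. Aj j t i k)" and mu: "\<mu> \<noteq> 0"
  shows "\<exists>B\<ge>0. \<forall>\<^sub>F z in at \<mu>. \<forall>s\<in>{0..1}. \<forall>n\<in>{1..N}. \<forall>i<d. \<forall>m\<in>{1..N}. \<forall>k<d. norm (Amat N \<Delta> h nd Aj s z n i m k) \<le> B"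
proof -
  obtain B1 where B1: "B1 \<ge> 0" "\<forall>s\<in>{0..1}. \<forall>n\<in>{1..N}. \<forall>i<d. \<forall>m\<in>{1..N}. \<forall>k<d. norm (Amat N \<Delta> h nd Aj s \<mu> n i m k) \<le> B1"
    using Mbound[OF Amat_Mcont[OF sm, where N=N and \<Delta>=\<Delta> and nd=nd and z=\<mu>]] by blast
  obtain B2 where B2: "B2 \<ge> 0" "\<forall>s\<in>{0..1}. \<forall>n\<in>{1..N}. \<forall>i<d. \<forall>m\<in>{1..N}. \<forall>k<d. norm (Ad N \<Delta> h nd Aj \<mu> s n i m k) \<le> B2"
    using Mbound[OF Ad_Mcont[OF sm, where N=N and \<Delta>=\<Delta> and nd=nd and \<mu>=\<mu>]] by blast
  have ev1: "\<forall>\<^sub>F z in at \<mu>. dist z \<mu> < 1" using tendstoD[OF tendsto_ident_at zero_less_one] .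
  show ?thesis
  proof (rule exI[of _ "1 + B1 + B2"], rule conjI)
    show "0 \<le> 1 + B1 + B2" using B1 B2 by simp
    show "\<forall>\<^sub>F z in at \<mu>. \<forall>s\<in>{0..1}. \<forall>n\<in>{1..N}. \<forall>i<d. \<forall>m\<in>{1..N}. \<forall>k<d. norm (Amat N \<Delta> h nd Aj s z n i m k) \<le> 1 + B1 + B2"
      using Amat_est[OF sm mu zero_less_one, where N=N and \<Delta>=\<Delta> and nd=nd] ev1
    proof eventually_elim
      case (elim z)
      show ?case
      proof (intro ballI allI impI)
        fix s :: real and n i m k assume s: "s \<in> {0..1}" and n: "n \<in> {1..N}" and i: "i < d" and m: "m \<in> {1..N}" and k: "k < d"
        have c: "norm (z - \<mu>) \<le> 1" using elim(2) by (simp add: dist_norm)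
        have "norm (Amat N \<Delta> h nd Aj s z n i m k) \<le> norm (Amat N \<Delta> h nd Aj s z n i m k - Amat N \<Delta> h nd Aj s \<mu> n i m k - (z - \<mu>) * Ad N \<Delta> h nd Aj \<mu> s n i m k)
            + norm (Amat N \<Delta> h nd Aj s \<mu> n i m k) + norm ((z - \<mu>) * Ad N \<Delta> h nd Aj \<mu> s n i m k)"
          by (rule norm3)
        also have "\<dots> \<le> 1 * 1 + B1 + 1 * B2"
          using elim(1) B1 B2 s n i m k c unfolding norm_mult
          by (intro add_mono mult_mono order_trans[OF _ mult_right_mono[OF c]]) auto
        finally show "norm (Amat N \<Delta> h nd Aj s z n i m k) \<le> 1 + B1 + B2" by simp
      qed
    qed
  qed
qed

lemma sum_unit:
  fixes f :: "nat \<Rightarrow> nat \<Rightarrow> complex"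
  assumes n: "n \<in> {1..N}" and i: "i < d"
  shows "(\<Sum>m\<in>{1..N}. \<Sum>k<d. (if n = m \<and> i = k then 1 else 0) * f m k) = f n i"
proof -
  have "(\<Sum>m\<in>{1..N}. \<Sum>k<d. (if n = m \<and> i = k then 1 else 0) * f m k) = (\<Sum>m\<in>{1..N}. if m = n then f n i else 0)"
  proof (rule sum.cong)
    fix m assume "m \<in> {1..N}"
    show "(\<Sum>k<d. (if n = m \<and> i = k then 1 else 0) * f m k) = (if m = n then f n i else 0)"
    proof (cases "m = n")
      case True
      have "(\<Sum>k<d. (if n = m \<and> i = k then 1 else 0) * f m k) = (\<Sum>k<d. if k = i then f n i else 0)"
        using True by (intro sum.cong) auto
      also have "\<dots> = f n i" using i by simp
      finally show ?thesis using True by simp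
    next
      case False then show ?thesis by simp
    qed
  qed simp
  also have "\<dots> = f n i" using n by simp
  finally show ?thesis .
qed

lemma mat_app_lin:
  "(\<Sum>m\<in>{1..N}. \<Sum>k<d. mat_app d N M (X m k) n i * c m k)
     = mat_app d N M (\<lambda>m' k'. \<Sum>m\<in>{1..N}. \<Sum>k<d. X m k m' k' * c m k) n i"
proof -
  let ?I = "{1..N} \<times> {..<d}"
  have "(\<Sum>m\<in>{1..N}. \<Sum>k<d. mat_app d N M (X m k) n i * c m k)
      = (\<Sum>(m,k)\<in>?I. \<Sum>(m',k')\<in>?I. M n i m' k' * X m k m' k' * c m k)"
    unfolding mat_app_def sum.cartesian_product by (simp add: sum_distrib_right case_prod_unfold)
  also have "\<dots> = (\<Sum>(m',k')\<in>?I. \<Sum>(m,k)\<in>?I. M n i m' k' * X m k m' k' * c m k)"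
    unfolding case_prod_unfold by (rule sum.swap)
  also have "\<dots> = mat_app d N M (\<lambda>m' k'. \<Sum>m\<in>{1..N}. \<Sum>k<d. X m k m' k' * c m k) n i"
    unfolding mat_app_def sum.cartesian_product by (simp add: sum_distrib_left mult.assoc case_prod_unfold)
  finally show ?thesis .
qed



theorem proposition3p1:
  fixes d N h :: nat and \<Delta> :: real and nd :: "nat \<Rightarrow> nat"
    and Aj :: "nat \<Rightarrow> real \<Rightarrow> nat \<Rightarrow> nat \<Rightarrow> real"
    and \<mu> :: complex and v :: bvec and q q\<mu> :: "real \<Rightarrow> bvec"
  assumes "d \<ge> 1" and "N \<ge> 1" and "\<Delta> > 0"
    and "nd 0 = 0" and "strict_mono_on {1..h} nd"
    and smooth: "\<forall>j\<le>h. \<forall>i<d. \<forall>k<d. smooth_fun (\<lambda>t. Aj j t i k)"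
    and periodic: "\<forall>j\<le>h. \<forall>t. \<forall>i<d. \<forall>k<d. Aj j (t + real N * \<Delta>) i k = Aj j t i k"
    and "\<mu> \<noteq> 0"
    and "\<exists>n\<in>{1..N}. \<exists>i<d. v n i \<noteq> 0"
    and "\<forall>n\<in>{1..N}. \<forall>i<d. mat_app d N (char_mat d N \<Delta> h nd Aj \<mu>) v n i = 0"
    and "ivp_sol d N (\<lambda>s x. mat_app d N (Amat N \<Delta> h nd Aj s \<mu>) x) v q"
    and "ivp_sol d N
           (\<lambda>s x. \<lambda>n i. mat_app d N (\<lambda>n i m k. deriv (\<lambda>z. Amat N \<Delta> h nd Aj s z n i m k) \<mu>) (q s) n i
                      + mat_app d N (Amat N \<Delta> h nd Aj s \<mu>) x n i)
           (\<lambda>_ _. 0) q\<mu>"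
  shows "(\<forall>n\<in>{1..N}. \<forall>i<d. \<forall>m\<in>{1..N}. \<forall>k<d.
            (\<lambda>z. char_mat d N \<Delta> h nd Aj z n i m k) field_differentiable (at \<mu>))
       \<and> (\<forall>n\<in>{1..N}. \<forall>i<d.
            mat_app d N (\<lambda>n i m k. deriv (\<lambda>z. char_mat d N \<Delta> h nd Aj z n i m k) \<mu>) v n i
              = q\<mu> 1 n i - vN N v n i)"
proof -
  have mu: "\<mu> \<noteq> 0" using assms(8) .
  have N1: "N \<ge> 1" using assms(2) .
  have qsol: "ivp_sol d N (\<lambda>s x. mat_app d N (Amat N \<Delta> h nd Aj s \<mu>) x) v q" using assms(11) .
  have qmusol: "ivp_sol d N
           (\<lambda>s x. \<lambda>n i. mat_app d N (\<lambda>n i m k. deriv (\<lambda>z. Amat N \<Delta> h nd Aj s z n i m k) \<mu>) (q s) n i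
                      + mat_app d N (Amat N \<Delta> h nd Aj s \<mu>) x n i)
           (\<lambda>_ _. 0) q\<mu>" using assms(12) .
  let ?M = "\<lambda>z s. Amat N \<Delta> h nd Aj s z"
  let ?F = "\<lambda>z. (\<lambda>s x. mat_app d N (Amat N \<Delta> h nd Aj s z) x)"
  let ?S = "\<lambda>z w. nsol d N (?F z) w"
  let ?Ad = "Ad N \<Delta> h nd Aj \<mu>"
  have Mc: "Mcont d N (?M z)" for z using Amat_Mcont[OF smooth] .
  have Fg0: "?F z = Fg d N (?M z) (\<lambda>_ _ _. 0)" for z by (simp add: Fg_def)
  have g0: "\<forall>n\<in>{1..N}. \<forall>i<d. continuous_on {0..1} (\<lambda>s. (\<lambda>_ _ _. 0::complex) s n i)" by simp
  have exF: "\<exists>x. ivp_sol d N (?F z) w x" for z w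
    using exist[OF Mc g0] by (simp only: Fg0)
  have unF: "\<forall>s\<in>{0..1}. \<forall>n\<in>{1..N}. \<forall>i<d. x s n i = y s n i"
    if "ivp_sol d N (?F z) w x" "ivp_sol d N (?F z) w y" for z w x y
    using uniq[OF Mc] that by (simp only: Fg0)
  have locF: "\<forall>s\<in>{0..1}. \<forall>x y. (\<forall>m\<in>{1..N}. \<forall>k<d. x m k = y m k) \<longrightarrow> (\<forall>n\<in>{1..N}. \<forall>i<d. ?F z s x n i = ?F z s y n i)" for z
    using mat_app_local by metis
  have Ssol: "ivp_sol d N (?F z) w (?S z w)" for z w by (rule nsol(1)[OF exF unF locF])
  have Suniq: "\<forall>s\<in>{0..1}. \<forall>n\<in>{1..N}. \<forall>i<d. ?S z w s n i = y s n i" if "ivp_sol d N (?F z) w y" for z w y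
    by (rule nsol(2)[OF exF unF locF that])
  have char_app_eq: "char_app d N \<Delta> h nd Aj z w n i = ?S z w 1 n i - Bapp N z w n i" for z w n i
    unfolding char_app_def nsol_def ..
  define E where "E = (\<lambda>m k. (\<lambda>m' k'. if m' = m \<and> k' = k then 1 else 0) :: bvec)"
  have char_mat_eq: "char_mat d N \<Delta> h nd Aj z n i m k = ?S z (E m k) 1 n i - Bapp N z (E m k) n i" for z n i m k
    unfolding char_mat_def char_app_eq E_def ..
  obtain B where B: "B \<ge> 0" "\<forall>\<^sub>F z in at \<mu>. \<forall>s\<in>{0..1}. \<forall>n\<in>{1..N}. \<forall>i<d. \<forall>m\<in>{1..N}. \<forall>k<d. norm (Amat N \<Delta> h nd Aj s z n i m k) \<le> B"
    using Amat_MB[OF smooth mu, where N=N and \<Delta>=\<Delta> and nd=nd] by blast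
  obtain B' where B': "B' \<ge> 0" "\<forall>s\<in>{0..1}. \<forall>n\<in>{1..N}. \<forall>i<d. \<forall>m\<in>{1..N}. \<forall>k<d. norm (?Ad s n i m k) \<le> B'"
    using Mbound[OF Ad_Mcont[OF smooth, where N=N and \<Delta>=\<Delta> and nd=nd and \<mu>=\<mu>]] by blast
  have Ad_eq: "deriv (\<lambda>z. Amat N \<Delta> h nd Aj s z n i m k) \<mu> = ?Ad s n i m k" for s n i m k
    by (rule DERIV_imp_deriv[OF Amat_deriv[OF mu]])
  have gen: "((\<lambda>z. ?S z w 1 n i) has_field_derivative P 1 n i) (at \<mu>)"
    if Pv: "ivp_sol d N (\<lambda>s x n i. mat_app d N (?Ad s) (?S \<mu> w s) n i + mat_app d N (Amat N \<Delta> h nd Aj s \<mu>) x n i) (\<lambda>_ _. 0) P"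
      and n: "n \<in> {1..N}" and i: "i < d" for w P n i
  proof (rule main_deriv[where M="?M" and M'="?Ad" and Q="\<lambda>z. ?S z w", OF _ Ssol Pv B(1) B(2) B'(1) B'(2) _ n i])
    show "\<forall>\<^sub>F z in at \<mu>. ivp_sol d N (\<lambda>s x. mat_app d N (Amat N \<Delta> h nd Aj s z) x) w (?S z w)"
      using Ssol by simp
    show "\<forall>\<^sub>F z in at \<mu>. \<forall>s\<in>{0..1}. \<forall>n\<in>{1..N}. \<forall>i<d. \<forall>m\<in>{1..N}. \<forall>k<d.
                norm (Amat N \<Delta> h nd Aj s z n i m k - Amat N \<Delta> h nd Aj s \<mu> n i m k - (z - \<mu>) * ?Ad s n i m k) \<le> e * norm (z - \<mu>)"
      if "e > 0" for e
      by (rule Amat_est[OF smooth mu that])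
  qed
  have Pex: "\<exists>P. ivp_sol d N (\<lambda>s x n i. mat_app d N (?Ad s) (?S \<mu> w s) n i + mat_app d N (Amat N \<Delta> h nd Aj s \<mu>) x n i) (\<lambda>_ _. 0) P" for w
  proof -
    have gc: "\<forall>n\<in>{1..N}. \<forall>i<d. continuous_on {0..1} (\<lambda>s. mat_app d N (?Ad s) (?S \<mu> w s) n i)"
      using Ad_Mcont[OF smooth, where N=N and \<Delta>=\<Delta> and nd=nd and \<mu>=\<mu>] ivp_cont[OF Ssol]
      unfolding Mcont_def by (auto intro!: mat_app_cont)
    obtain P where P: "ivp_sol d N (Fg d N (?M \<mu>) (\<lambda>s n i. mat_app d N (?Ad s) (?S \<mu> w s) n i)) (\<lambda>_ _. 0) P"
      using exist[OF Mc gc] by blast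
    show ?thesis by (rule exI, rule ivp_cong_F[OF P]) (simp add: Fg_def)
  qed
  have Bapp_d: "((\<lambda>z. Bapp N z w n i) has_field_derivative (if n < N then 0 else w 1 i)) (at \<mu>)" for w n i
    unfolding Bapp_def by (cases "n < N") (auto intro!: derivative_eq_intros)
  have diff1: "(\<lambda>z. char_mat d N \<Delta> h nd Aj z n i m k) field_differentiable (at \<mu>)"
    if n: "n \<in> {1..N}" and i: "i < d" for n i m k
  proof -
    obtain P where P: "ivp_sol d N (\<lambda>s x n i. mat_app d N (?Ad s) (?S \<mu> (E m k) s) n i + mat_app d N (Amat N \<Delta> h nd Aj s \<mu>) x n i) (\<lambda>_ _. 0) P"
      using Pex by blast
    have "((\<lambda>z. ?S z (E m k) 1 n i - Bapp N z (E m k) n i) has_field_derivative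
        (P 1 n i - (if n < N then 0 else E m k 1 i))) (at \<mu>)"
      by (rule DERIV_diff[OF gen[OF P n i] Bapp_d])
    then show ?thesis unfolding char_mat_eq field_differentiable_def by blast
  qed
  have lin: "char_app d N \<Delta> h nd Aj z v n i = mat_app d N (\<lambda>n i m k. char_mat d N \<Delta> h nd Aj z n i m k) v n i"
    if n: "n \<in> {1..N}" and i: "i < d" for z n i
  proof -
    define Y where "Y = (\<lambda>s n' i'. \<Sum>m\<in>{1..N}. \<Sum>k<d. ?S z (E m k) s n' i' * v m k)"
    have Ysol: "ivp_sol d N (?F z) v Y"
      unfolding ivp_sol_def
    proof (intro ballI allI impI conjI)
      fix n' i' assume n': "n' \<in> {1..N}" and i': "i' < d"
      have "Y 0 n' i' = (\<Sum>m\<in>{1..N}. \<Sum>k<d. E m k n' i' * v m k)"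
        unfolding Y_def using Ssol[of z] n' i' unfolding ivp_sol_def by (intro sum.cong) auto
      also have "\<dots> = v n' i'" unfolding E_def by (rule sum_unit[OF n' i'])
      finally show "Y 0 n' i' = v n' i'" .
      fix s :: real assume s: "s \<in> {0..1}"
      have "((\<lambda>t. Y t n' i') has_vector_derivative
          (\<Sum>m\<in>{1..N}. \<Sum>k<d. mat_app d N (Amat N \<Delta> h nd Aj s z) (?S z (E m k) s) n' i' * v m k)) (at s within {0..1})"
        unfolding Y_def
        using Ssol s n' i' unfolding ivp_sol_def
        by (intro has_vector_derivative_sum has_vector_derivative_mult_left) auto
      then show "((\<lambda>t. Y t n' i') has_vector_derivative ?F z s (Y s) n' i') (at s within {0..1})"
        by (simp only: mat_app_lin Y_def)
    qed
    have SY: "?S z v 1 n i = Y 1 n i" using Suniq[OF Ysol] n i by simp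
    have BB: "Bapp N z v n i = (\<Sum>m\<in>{1..N}. \<Sum>k<d. Bapp N z (E m k) n i * v m k)"
    proof (cases "n < N")
      case True
      have n1: "n + 1 \<in> {1..N}" using True by auto
      have "(\<Sum>m\<in>{1..N}. \<Sum>k<d. Bapp N z (E m k) n i * v m k)
          = (\<Sum>m\<in>{1..N}. \<Sum>k<d. (if n + 1 = m \<and> i = k then 1 else 0) * v m k)"
        using True by (simp add: Bapp_def E_def)
      also have "\<dots> = v (n + 1) i" by (rule sum_unit[OF n1 i])
      finally show ?thesis using True by (simp add: Bapp_def)
    next
      case False
      have n1: "1 \<in> {1..N}" using N1 by auto
      have "(\<Sum>m\<in>{1..N}. \<Sum>k<d. Bapp N z (E m k) n i * v m k)
          = (\<Sum>m\<in>{1..N}. \<Sum>k<d. z * ((if 1 = m \<and> i = k then 1 else 0) * v m k))"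
        using False by (intro sum.cong) (auto simp: Bapp_def E_def)
      also have "\<dots> = z * (\<Sum>m\<in>{1..N}. \<Sum>k<d. (if 1 = m \<and> i = k then 1 else 0) * v m k)"
        by (simp add: sum_distrib_left)
      also have "\<dots> = z * v 1 i" by (simp only: sum_unit[OF n1 i])
      finally show ?thesis using False by (simp add: Bapp_def)
    qed
    have "mat_app d N (\<lambda>n i m k. char_mat d N \<Delta> h nd Aj z n i m k) v n i
        = (\<Sum>m\<in>{1..N}. \<Sum>k<d. ?S z (E m k) 1 n i * v m k - Bapp N z (E m k) n i * v m k)"
      unfolding mat_app_def char_mat_eq by (simp add: left_diff_distrib)
    also have "\<dots> = Y 1 n i - Bapp N z v n i"
      unfolding BB Y_def by (simp add: sum_subtractf)
    finally show ?thesis using SY char_app_eq by simp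
  qed
  have qS: "\<forall>s\<in>{0..1}. \<forall>n\<in>{1..N}. \<forall>i<d. ?S \<mu> v s n i = q s n i" by (rule Suniq[OF qsol])
  have Pq: "ivp_sol d N (\<lambda>s x n i. mat_app d N (?Ad s) (?S \<mu> v s) n i + mat_app d N (Amat N \<Delta> h nd Aj s \<mu>) x n i) (\<lambda>_ _. 0) q\<mu>"
  proof (rule ivp_cong_F[OF qmusol], intro ballI allI impI)
    fix s :: real and y n i assume s: "s \<in> {0..1}" and n: "n \<in> {1..N}" and i: "i < d"
    have "mat_app d N (\<lambda>n i m k. deriv (\<lambda>z. Amat N \<Delta> h nd Aj s z n i m k) \<mu>) (q s) n i
        = mat_app d N (?Ad s) (?S \<mu> v s) n i"
      unfolding Ad_eq using qS s by (intro mat_app_local) auto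
    then show "mat_app d N (\<lambda>n i m k. deriv (\<lambda>z. Amat N \<Delta> h nd Aj s z n i m k) \<mu>) (q s) n i
                      + mat_app d N (Amat N \<Delta> h nd Aj s \<mu>) y n i
        = mat_app d N (?Ad s) (?S \<mu> v s) n i + mat_app d N (Amat N \<Delta> h nd Aj s \<mu>) y n i" by simp
  qed
  have part2: "mat_app d N (\<lambda>n i m k. deriv (\<lambda>z. char_mat d N \<Delta> h nd Aj z n i m k) \<mu>) v n i = q\<mu> 1 n i - vN N v n i"
    if n: "n \<in> {1..N}" and i: "i < d" for n i
  proof -
    have "((\<lambda>z. ?S z v 1 n i - Bapp N z v n i) has_field_derivative
        (q\<mu> 1 n i - (if n < N then 0 else v 1 i))) (at \<mu>)"
      by (rule DERIV_diff[OF gen[OF Pq n i] Bapp_d])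
    moreover have "(if n < N then 0 else v 1 i) = vN N v n i" using n by (auto simp: vN_def)
    ultimately have D1: "((\<lambda>z. mat_app d N (\<lambda>n i m k. char_mat d N \<Delta> h nd Aj z n i m k) v n i) has_field_derivative
        (q\<mu> 1 n i - vN N v n i)) (at \<mu>)"
      using lin[OF n i] char_app_eq by simp
    have D2: "((\<lambda>z. mat_app d N (\<lambda>n i m k. char_mat d N \<Delta> h nd Aj z n i m k) v n i) has_field_derivative
        mat_app d N (\<lambda>n i m k. deriv (\<lambda>z. char_mat d N \<Delta> h nd Aj z n i m k) \<mu>) v n i) (at \<mu>)"
      unfolding mat_app_def
      by (intro DERIV_sum DERIV_cmult_right DERIV_deriv_iff_field_differentiable[THEN iffD2] diff1 n i)
    show ?thesis using DERIV_unique[OF D2 D1] .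
  qed
  show ?thesis using diff1 part2 by blast
qed


end
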